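(* For all $n\ge 2$, \[\left|\mathrm{Av}_n[\overline{12}34]\right|=\left|\mathrm{Av}_n[\overline{12}43]\right|=1+\sum_{i=0}^{n-2} i\,(i+1)^{n-i-2}.\]
   Context: For $\sigma\in S_n$, the cyclic permutation $[\sigma]$ is the set of all rotations of $\sigma$; $[S_n]$ is the set of cyclic permutations of length $n$. A vincular pattern is a permutation $\pi\in S_k$ with some pairs of adjacent positions joined by an overline; a linear permutation $\tau$ contains it if $\tau$ has a subsequence order-isomorphic to $\pi$ whose entries corresponding to overlined adjacent positions are adjacent in $\tau$. $[\sigma]$ contains $[\pi]$ if some rotation of $\sigma$ contains $\pi$. For example $[\overline{12}34]$ is contained in $[\sigma]$ iff some rotation of $\sigma$ has entries $a,b,c,d$ in this order with $a,b$ adjacent and $a<b<c<d$. $\mathrm{Av}_n[\pi]$ is the set of $[\sigma]\in[S_n]$ avoiding $[\pi]$. *)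

theory Defs
  imports Main
begin

definition lin_perms :: "nat \<Rightarrow> nat list set" where
  "lin_perms n = {xs. distinct xs \<and> set xs = {1..n}}"

text \<open>The cyclic permutation [sigma]: the set of all rotations of sigma.\<close>
definition cyc :: "nat list \<Rightarrow> nat list set" where
  "cyc \<sigma> = {rotate k \<sigma> | k. k < length \<sigma>}"

definition cyc_perms :: "nat \<Rightarrow> nat list set set" where
  "cyc_perms n = cyc ` lin_perms n"

text \<open>A vincular pattern is a pattern pi (a permutation in one-line notation) together
  with the set adj of (0-based) positions i such that positions i and i+1 are joined
  by an overline.\<close>
definition contains_vinc :: "nat list \<Rightarrow> nat list \<Rightarrow> nat set \<Rightarrow> bool" where
  "contains_vinc \<tau> \<pi> adj \<longleftrightarrow>
     (\<exists>is. length is = length \<pi> \<and> sorted_wrt (<) is \<and> (\<forall>j\<in>set is. j < length \<tau>) \<and>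
        (\<forall>a<length \<pi>. \<forall>b<length \<pi>. (\<tau> ! (is ! a) < \<tau> ! (is ! b)) \<longleftrightarrow> (\<pi> ! a < \<pi> ! b)) \<and>
        (\<forall>i\<in>adj. Suc i < length \<pi> \<longrightarrow> is ! Suc i = Suc (is ! i)))"

definition cyc_contains :: "nat list set \<Rightarrow> nat list \<Rightarrow> nat set \<Rightarrow> bool" where
  "cyc_contains C \<pi> adj \<longleftrightarrow> (\<exists>\<sigma>\<in>C. contains_vinc \<sigma> \<pi> adj)"

definition cyc_Av :: "nat \<Rightarrow> nat list \<Rightarrow> nat set \<Rightarrow> nat list set set" where
  "cyc_Av n \<pi> adj = {C \<in> cyc_perms n. \<not> cyc_contains C \<pi> adj}"

end

theory Submission
  imports Defs
begin

fun na :: "nat set \<Rightarrow> nat list \<Rightarrow> bool" where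
  "na L (x # y # ys) = ((x < y \<longrightarrow> y \<in> L) \<and> na L (y # ys))"
| "na L _ = True"

lemma na_append:
  "na L (xs @ ys) = (na L xs \<and> na L ys \<and> (xs \<noteq> [] \<and> ys \<noteq> [] \<and> last xs < hd ys \<longrightarrow> hd ys \<in> L))"
proof (induction xs)
  case Nil then show ?case by simp
next
  case (Cons a xs)
  then show ?case by (cases xs; cases ys) auto
qed

lemma na_Cons: "na L (x # ys) = (na L ys \<and> (ys \<noteq> [] \<and> x < hd ys \<longrightarrow> hd ys \<in> L))"
  by (cases ys) auto

lemma na_nth: "na L w = (\<forall>i. Suc i < length w \<longrightarrow> w!i < w!Suc i \<longrightarrow> w!Suc i \<in> L)"
proof (induction L w rule: na.induct)
  case (1 L x y ys)
  show ?case
    apply (simp add: 1)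
    apply (auto simp: nth_Cons split: nat.splits)
    done
qed auto

lemma na_subset: "set w \<subseteq> L \<Longrightarrow> na L w"
  by (induction L w rule: na.induct) auto

lemma na_mono: "na L w \<Longrightarrow> L \<inter> set w \<subseteq> L' \<Longrightarrow> na L' w"
  by (induction L w rule: na.induct) auto

definition WW :: "nat list \<Rightarrow> nat set \<Rightarrow> nat list set" where
  "WW U S = {w. distinct w \<and> set w = set U \<union> S \<and> w \<noteq> [] \<and> hd w \<in> set U \<and>
                filter (\<lambda>x. x \<in> set U) w = U \<and> na (set U) w}"

lemma WW_empty: "distinct U \<Longrightarrow> U \<noteq> [] \<Longrightarrow> WW U {} = {U}"
proof -
  assume U: "distinct U" "U \<noteq> []"
  have "w = U" if "w \<in> WW U {}" for w
  proof -
    have "filter (\<lambda>x. x \<in> set U) w = w" using that by (auto simp: WW_def)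
    then show ?thesis using that by (simp add: WW_def)
  qed
  moreover have "U \<in> WW U {}" using U by (auto simp: WW_def na_subset)
  ultimately show ?thesis by blast
qed

lemma hd_filter_eq: "w \<noteq> [] \<Longrightarrow> hd w \<in> set U \<Longrightarrow> filter (\<lambda>x. x \<in> set U) w = U \<Longrightarrow> hd U = hd w"
proof -
  assume a: "w \<noteq> []" "hd w \<in> set U" "filter (\<lambda>x. x \<in> set U) w = U"
  then obtain b ws where b: "w = b # ws" by (cases w) auto
  then have "U = b # filter (\<lambda>x. x \<in> set U) ws" using a by auto
  then show ?thesis using b by (metis list.sel(1))
qed

definition ins :: "nat \<Rightarrow> nat option \<Rightarrow> nat list \<Rightarrow> nat list" where
  "ins s opt w = (case opt of None \<Rightarrow> w @ [s]
     | Some m \<Rightarrow> takeWhile (\<lambda>x. x \<noteq> m) w @ s # dropWhile (\<lambda>x. x \<noteq> m) w)"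

definition succ :: "nat \<Rightarrow> nat list \<Rightarrow> nat option" where
  "succ s w = (case tl (dropWhile (\<lambda>x. x \<noteq> s) w) of [] \<Rightarrow> None | m # _ \<Rightarrow> Some m)"

lemma ins_split: "m \<notin> set p \<Longrightarrow> ins s (Some m) (p @ m # q) = p @ s # m # q"
  by (auto simp: ins_def takeWhile_append dropWhile_append)

lemma succ_split: "s \<notin> set p \<Longrightarrow> succ s (p @ s # q) = (case q of [] \<Rightarrow> None | m # _ \<Rightarrow> Some m)"
  by (auto simp: succ_def dropWhile_append)

lemma filter_ins: "s \<notin> set w \<Longrightarrow> (case opt of None \<Rightarrow> True | Some m \<Rightarrow> m \<in> set w) \<Longrightarrow>
   filter (\<lambda>x. x \<noteq> s) (ins s opt w) = w"
proof (cases opt)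
  case None
  assume "s \<notin> set w" then show ?thesis using None by (auto simp add: ins_def filter_id_conv)
next
  case (Some m)
  assume a: "s \<notin> set w" "(case opt of None \<Rightarrow> True | Some m \<Rightarrow> m \<in> set w)"
  then have "m \<in> set w" using Some by simp
  then obtain p q where pq: "w = p @ m # q" "m \<notin> set p" by (meson split_list_first)
  moreover have "filter (\<lambda>x. x \<noteq> s) p = p" "filter (\<lambda>x. x \<noteq> s) q = q"
    using a pq by (auto simp: filter_id_conv)
  ultimately show ?thesis using a Some by (auto simp: ins_split)
qed

lemma succ_ins: "s \<notin> set w \<Longrightarrow> (case opt of None \<Rightarrow> True | Some m \<Rightarrow> m \<in> set w) \<Longrightarrow>
   succ s (ins s opt w) = opt"
proof (cases opt)
  case None
  assume "s \<notin> set w" then show ?thesis using None by (simp add: ins_def succ_split)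
next
  case (Some m)
  assume a: "s \<notin> set w" "(case opt of None \<Rightarrow> True | Some m \<Rightarrow> m \<in> set w)"
  then have "m \<in> set w" using Some by simp
  then obtain p q where pq: "w = p @ m # q" "m \<notin> set p" by (meson split_list_first)
  then show ?thesis using a Some by (auto simp: ins_split succ_split)
qed

definition Opts :: "nat list \<Rightarrow> nat option set" where
  "Opts U = insert None (Some ` (set U - {hd U}))"

lemma card_OO: "distinct U \<Longrightarrow> U \<noteq> [] \<Longrightarrow> card (Opts U) = length U"
proof -
  assume a: "distinct U" "U \<noteq> []"
  have "card (Some ` (set U - {hd U})) = card (set U) - 1"
    by (simp add: card_image a)
  moreover have "card (set U) = length U" using a by (simp add: distinct_card)
  moreover have "length U > 0" using a by simp
  ultimately show ?thesis unfolding Opts_def by (simp add: card_insert_if)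
qed

lemma ins_in:
  assumes w: "w \<in> WW U S" and o: "opt \<in> Opts U"
    and s: "s \<notin> set U" "s \<notin> S" "\<forall>x\<in>set U \<union> S. s < x"
  shows "ins s opt w \<in> WW U (insert s S)"
proof (cases opt)
  case None
  have "ins s opt w = w @ [s]" using None by (simp add: ins_def)
  moreover have "last w > s" using w s by (auto simp: WW_def)
  ultimately show ?thesis using w s by (auto simp: WW_def na_append)
next
  case (Some m)
  have m: "m \<in> set U" "m \<noteq> hd U" using o Some by (auto simp: Opts_def)
  have hdw: "hd U = hd w" using w by (auto simp: WW_def hd_filter_eq)
  have "m \<in> set w" using m w by (auto simp: WW_def)
  then obtain p q where pq: "w = p @ m # q" "m \<notin> set p" by (meson split_list_first)
  have pne: "p \<noteq> []" using pq hdw m by auto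
  have e: "ins s opt w = p @ s # m # q" using pq Some by (simp add: ins_split)
  have "last p \<in> set w" using pq pne by auto
  then have lp: "last p > s" using w s by (auto simp: WW_def)
  have naw: "na (set U) (p @ m # q)" using w pq by (simp add: WW_def)
  then have "na (set U) (p @ s # m # q)" using lp m by (simp add: na_append na_Cons)
  moreover have "hd (p @ s # m # q) = hd w" using pq pne by simp
  ultimately show ?thesis using w s e pq by (auto simp: WW_def)
qed

lemma ins_surj:
  assumes w: "w \<in> WW U (insert s S)"
    and s: "s \<notin> set U" "s \<notin> S" "\<forall>x\<in>set U \<union> S. s < x"
  shows "\<exists>w' opt. w' \<in> WW U S \<and> opt \<in> Opts U \<and> w = ins s opt w'"
proof -
  have "s \<in> set w" using w by (auto simp: WW_def)
  then obtain p q where pq: "w = p @ s # q" by (meson split_list)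
  have pne: "p \<noteq> []" using pq w s by (cases p) (auto simp: WW_def)
  have dw: "distinct w" using w by (simp add: WW_def)
  have spq: "s \<notin> set p" "s \<notin> set q" using dw pq by auto
  have naw: "na (set U) (p @ s # q)" using w pq by (simp add: WW_def)
  define w' where "w' = p @ q"
  have setw': "set w' = set U \<union> S" using w pq spq s by (auto simp: WW_def w'_def)
  have fw': "filter (\<lambda>x. x \<in> set U) w' = U" using w pq s by (auto simp: WW_def w'_def)
  show ?thesis
  proof (cases q)
    case Nil
    have "w' \<in> WW U S" using w pq pne s setw' fw' naw Nil dw by (auto simp: WW_def w'_def na_append)
    moreover have "w = ins s None w'" using pq Nil by (simp add: ins_def w'_def)
    ultimately show ?thesis unfolding Opts_def by blast
  next
    case (Cons m q')
    have "m \<in> set U \<union> S" using w pq Cons by (auto simp: WW_def)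
    then have sm: "s < m" using s by auto
    then have mU: "m \<in> set U" using naw Cons by (simp add: na_append)
    have "m \<noteq> hd p" using dw pq Cons pne by auto
    moreover have "hd U = hd w" using w hd_filter_eq[of w U] by (simp add: WW_def)
    then have "hd U = hd p" using pq pne by simp
    ultimately have o: "Some m \<in> Opts U" using mU by (simp add: Opts_def)
    have "na (set U) (p @ q)" using naw Cons mU by (simp add: na_append na_Cons)
    then have "w' \<in> WW U S" using w pq pne s setw' fw' dw by (auto simp: WW_def w'_def)
    moreover have "w = ins s (Some m) w'" using pq Cons dw by (simp add: ins_split w'_def)
    ultimately show ?thesis using o by blast
  qed
qed

lemma WW_count:
  assumes "distinct U" "U \<noteq> []" "finite S" "\<forall>s\<in>S. \<forall>u\<in>set U. s < u"
  shows "card (WW U S) = length U ^ card S"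
  using assms
proof (induction "card S" arbitrary: S)
  case 0
  then have "S = {}" by simp
  then show ?case using 0 by (simp add: WW_empty)
next
  case (Suc k)
  define s where "s = Min S"
  have sS: "s \<in> S" using Suc s_def by (metis Min_in card_0_eq nat.simps(3))
  define S' where "S' = S - {s}"
  have S: "S = insert s S'" "s \<notin> S'" using sS S'_def by auto
  have cS': "card S' = k" using Suc S by (metis card_insert_disjoint diff_Suc_1 finite_insert)
  have sl: "\<forall>x\<in>set U \<union> S'. s < x"
  proof
    fix x assume "x \<in> set U \<union> S'"
    then show "s < x"
    proof
      assume "x \<in> set U" then show ?thesis using Suc sS by auto
    next
      assume x: "x \<in> S'"
      then have "s \<le> x" using Suc s_def S'_def by auto
      then show ?thesis using x S by (cases "s = x") auto
    qed
  qed
  have sU: "s \<notin> set U" using Suc sS by auto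
  have IH: "card (WW U S') = length U ^ k"
    using Suc S cS' by (metis finite_insert insert_iff)
  let ?f = "\<lambda>(w, opt). ins s opt w"
  have img: "WW U S = ?f ` (WW U S' \<times> Opts U)"
  proof
    show "WW U S \<subseteq> ?f ` (WW U S' \<times> Opts U)"
    proof
      fix w assume "w \<in> WW U S"
      then obtain w' opt where "w' \<in> WW U S'" "opt \<in> Opts U" "w = ins s opt w'"
        using ins_surj[of w U s S'] S sU sl by auto
      then show "w \<in> ?f ` (WW U S' \<times> Opts U)" by force
    qed
  next
    show "?f ` (WW U S' \<times> Opts U) \<subseteq> WW U S"
      using ins_in[of _ U S' _ s] S sU sl by auto
  qed
  have cond: "s \<notin> set w \<and> (case opt of None \<Rightarrow> True | Some m \<Rightarrow> m \<in> set w)"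
    if "w \<in> WW U S'" "opt \<in> Opts U" for w opt
    using that S sU by (auto simp: WW_def Opts_def split: option.splits)
  have inj: "inj_on ?f (WW U S' \<times> Opts U)"
  proof (rule inj_onI)
    fix x y assume x: "x \<in> WW U S' \<times> Opts U" and y: "y \<in> WW U S' \<times> Opts U" and e: "?f x = ?f y"
    obtain w1 o1 where 1: "x = (w1, o1)" by force
    obtain w2 o2 where 2: "y = (w2, o2)" by force
    have c1: "s \<notin> set w1 \<and> (case o1 of None \<Rightarrow> True | Some m \<Rightarrow> m \<in> set w1)" using cond x 1 by auto
    have c2: "s \<notin> set w2 \<and> (case o2 of None \<Rightarrow> True | Some m \<Rightarrow> m \<in> set w2)" using cond y 2 by auto
    have e': "ins s o1 w1 = ins s o2 w2" using e 1 2 by simp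
    have "w1 = w2" using filter_ins[of s w1 o1] filter_ins[of s w2 o2] c1 c2 e' by metis
    moreover have "o1 = o2" using succ_ins[of s w1 o1] succ_ins[of s w2 o2] c1 c2 e' by metis
    ultimately show "x = y" using 1 2 by simp
  qed
  have fin: "finite (WW U S')" by (metis IH Suc.prems(1,2) card.infinite length_0_conv power_not_zero) 
  have "card (WW U S) = card (WW U S' \<times> Opts U)" using img inj by (simp add: card_image)
  also have "\<dots> = card (WW U S') * card (Opts U)" by (simp add: card_cartesian_product)
  also have "\<dots> = length U ^ k * length U" using IH card_OO Suc by simp
  finally show ?case using Suc(2) by (metis power_Suc2)
qed

definition insb :: "nat \<Rightarrow> nat \<Rightarrow> nat list \<Rightarrow> nat list" where
  "insb x b w = takeWhile (\<lambda>y. y \<noteq> x) w @ x # b # tl (dropWhile (\<lambda>y. y \<noteq> x) w)"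

lemma insb_split: "x \<notin> set p \<Longrightarrow> insb x b (p @ x # q) = p @ x # b # q"
  by (auto simp: insb_def takeWhile_append dropWhile_append)

lemma hd_app_Cons: "hd (p @ x # q) = hd (p @ x # r)"
  by (cases p) auto

lemma Bad_count:
  assumes U: "U = U1 @ x # b # U2" "distinct U" "b < x"
    and S: "\<forall>s\<in>S. \<forall>u\<in>set U. s < u"
  shows "card {w \<in> WW U S. \<exists>p q. w = p @ x # b # q} = card (WW (U1 @ x # U2) S)"
proof -
  define U' where "U' = U1 @ x # U2"
  have setU: "set U = insert b (set U')" using U by (auto simp: U'_def)
  have bU': "b \<notin> set U'" using U by (auto simp: U'_def)
  have bS: "b \<notin> S" using S U by force
  have xU1: "x \<notin> set U1" using U by auto
  have xU2: "x \<notin> set (b # U2)" "x \<notin> set U2" using U by auto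
  have img: "{w \<in> WW U S. \<exists>p q. w = p @ x # b # q} = insb x b ` WW U' S"
  proof
    show "{w \<in> WW U S. \<exists>p q. w = p @ x # b # q} \<subseteq> insb x b ` WW U' S"
    proof
      fix w assume "w \<in> {w \<in> WW U S. \<exists>p q. w = p @ x # b # q}"
      then obtain p q where w: "w \<in> WW U S" and pq: "w = p @ x # b # q" by blast
      have dw: "distinct w" using w by (simp add: WW_def)
      have xp: "x \<notin> set p" and bpq: "b \<notin> set p" "b \<notin> set q" and bx: "b \<noteq> x" using dw pq by auto
      define w' where "w' = p @ x # q"
      have e: "insb x b w' = w" using pq xp by (simp add: w'_def insb_split)
      have bw': "b \<notin> set w'" using bpq bx by (simp add: w'_def)
      have "set w' = set w - {b}" using dw pq by (auto simp: w'_def)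
      then have sw': "set w' = set U' \<union> S" using w setU bU' bS by (auto simp: WW_def)
      have hw': "hd w' = hd w" using pq by (simp add: w'_def hd_app_Cons)
      have "hd w \<in> set U" "w \<noteq> []" using w by (auto simp: WW_def)
      then have hw'U: "hd w' \<in> set U'" using hw' sw' bw' setU
        by (metis hd_in_set insertE list.simps(3) w'_def append_is_Nil_conv)
      have f0: "filter (\<lambda>y. y \<in> set U) w = U" using w by (simp add: WW_def)
      have xbU: "x \<in> set U" "b \<in> set U" using setU by (auto simp: U'_def)
      have "filter (\<lambda>y. y \<in> set U) p @ x # b # filter (\<lambda>y. y \<in> set U) q = U"
        using f0 pq xbU by simp
      then have f1: "filter (\<lambda>y. y \<in> set U) p @ x # b # filter (\<lambda>y. y \<in> set U) q = U1 @ x # b # U2"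
        using U(1) by (rule trans)
      have "x \<notin> set (filter (\<lambda>y. y \<in> set U) p)" using xp by simp
      then have fpq: "filter (\<lambda>y. y \<in> set U) p = U1" "filter (\<lambda>y. y \<in> set U) q = U2"
        using f1[symmetric] xU1 xU2 append_Cons_eq_iff[of x U1 "b # U2"] by auto
      have "filter (\<lambda>y. y \<in> set U') w' = filter (\<lambda>y. y \<in> set U) w'"
        using bw' setU by (intro filter_cong) auto
      then have fw': "filter (\<lambda>y. y \<in> set U') w' = U'"
        using fpq setU by (simp add: w'_def U'_def)
      have naw: "na (set U) (p @ x # b # q)" using w pq by (simp add: WW_def)
      then have n1: "na (set U) p" "na (set U) q" "p \<noteq> [] \<and> last p < x \<longrightarrow> x \<in> set U"
        by (auto simp: na_append na_Cons)
      have "set U \<inter> set p \<subseteq> set U'" "set U \<inter> set q \<subseteq> set U'" using bpq unfolding setU by blast+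
      then have "na (set U') p" "na (set U') q" using na_mono n1(1,2) by blast+
      moreover have "q \<noteq> [] \<and> x < hd q \<longrightarrow> hd q \<in> set U'"
      proof
        assume a: "q \<noteq> [] \<and> x < hd q"
        then have "hd q \<in> set w" using pq by auto
        then have "hd q \<in> set U \<union> S" using w by (simp add: WW_def)
        moreover have "hd q \<notin> S" using a S U by force
        moreover have "hd q \<noteq> b" using a bpq by (metis hd_in_set)
        ultimately show "hd q \<in> set U'" using setU by auto
      qed
      moreover have "x \<in> set U'" by (simp add: U'_def)
      ultimately have "na (set U') w'" by (auto simp: w'_def na_append na_Cons)
      then have "w' \<in> WW U' S" using dw pq sw' hw'U fw' by (auto simp: WW_def w'_def)
      then show "w \<in> insb x b ` WW U' S" using e by blast
    qed
  next
    show "insb x b ` WW U' S \<subseteq> {w \<in> WW U S. \<exists>p q. w = p @ x # b # q}"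
    proof
      fix w assume "w \<in> insb x b ` WW U' S"
      then obtain w' where w': "w' \<in> WW U' S" and e: "w = insb x b w'" by blast
      have "x \<in> set w'" using w' by (auto simp: WW_def U'_def)
      then obtain p q where pq: "w' = p @ x # q" "x \<notin> set p" by (meson split_list_first)
      have e2: "w = p @ x # b # q" using e pq by (simp add: insb_split)
      have bw': "b \<notin> set w'" using w' bU' bS by (auto simp: WW_def)
      have dw: "distinct w" using w' e2 pq bw' by (auto simp: WW_def)
      have sw: "set w = set U \<union> S" using w' e2 pq setU by (auto simp: WW_def)
      have "hd w = hd w'" using e2 pq by (simp add: hd_app_Cons)
      then have hw: "hd w \<in> set U" using w' setU by (auto simp: WW_def)
      have f1: "filter (\<lambda>y. y \<in> set U') p @ x # filter (\<lambda>y. y \<in> set U') q = U1 @ x # U2"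
        using w' pq by (simp add: WW_def U'_def)
      have "x \<notin> set (filter (\<lambda>y. y \<in> set U') p)" using pq by simp
      then have fpq: "filter (\<lambda>y. y \<in> set U') p = U1" "filter (\<lambda>y. y \<in> set U') q = U2"
        using f1[symmetric] xU1 xU2 append_Cons_eq_iff[of x U1 "U2"] by auto
      have "filter (\<lambda>y. y \<in> set U) p = filter (\<lambda>y. y \<in> set U') p"
        using bw' pq setU by (intro filter_cong) auto
      moreover have "filter (\<lambda>y. y \<in> set U) q = filter (\<lambda>y. y \<in> set U') q"
        using bw' pq setU by (intro filter_cong) auto
      ultimately have fpq2: "filter (\<lambda>y. y \<in> set U) p = U1" "filter (\<lambda>y. y \<in> set U) q = U2"
        using fpq by simp_all
      have xbU2: "x \<in> set U" "b \<in> set U" using setU by (auto simp: U'_def)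
      have "filter (\<lambda>y. y \<in> set U) w = filter (\<lambda>y. y \<in> set U) p @ x # b # filter (\<lambda>y. y \<in> set U) q"
        using e2 xbU2 by simp
      also have "\<dots> = U1 @ x # b # U2" using fpq2 by simp
      also have "\<dots> = U" using U(1) by simp
      finally have fw: "filter (\<lambda>y. y \<in> set U) w = U" .
      have naw: "na (set U') (p @ x # q)" using w' pq by (simp add: WW_def)
      then have n1: "na (set U') p" "na (set U') q" "p \<noteq> [] \<and> last p < x \<longrightarrow> x \<in> set U'"
        by (auto simp: na_append na_Cons)
      have "set U' \<inter> set p \<subseteq> set U" "set U' \<inter> set q \<subseteq> set U" unfolding setU by blast+
      then have "na (set U) p" "na (set U) q" using na_mono n1(1,2) by blast+
      moreover have "q \<noteq> [] \<and> b < hd q \<longrightarrow> hd q \<in> set U"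
      proof
        assume a: "q \<noteq> [] \<and> b < hd q"
        then have "hd q \<in> set w'" using pq by auto
        then have "hd q \<in> set U' \<union> S" using w' by (simp add: WW_def)
        moreover have "hd q \<notin> S" using a S U by force
        ultimately show "hd q \<in> set U" using setU by auto
      qed
      moreover have "x \<in> set U" "b \<in> set U" using setU by (auto simp: U'_def)
      ultimately have "na (set U) w" using U by (auto simp: e2 na_append na_Cons)
      then have "w \<in> WW U S" using dw sw hw fw e2 by (auto simp: WW_def)
      then show "w \<in> {w \<in> WW U S. \<exists>p q. w = p @ x # b # q}" using e2 by blast
    qed
  qed
  have inj: "inj_on (insb x b) (WW U' S)"
  proof (rule inj_onI)
    fix w1 w2 assume a: "w1 \<in> WW U' S" "w2 \<in> WW U' S" "insb x b w1 = insb x b w2"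
    have "filter (\<lambda>y. y \<noteq> b) (insb x b w) = w" if "w \<in> WW U' S" for w
    proof -
      have "x \<in> set w" using that by (auto simp: WW_def U'_def)
      then obtain p q where pq: "w = p @ x # q" "x \<notin> set p" by (meson split_list_first)
      have bw: "b \<notin> set w" using that bU' bS by (auto simp: WW_def)
      then have "filter (\<lambda>y. y \<noteq> b) p = p" "filter (\<lambda>y. y \<noteq> b) q = q"
        using pq by (auto simp: filter_id_conv)
      then show ?thesis using pq bw U by (simp add: insb_split)
    qed
    then show "w1 = w2" using a by metis
  qed
  show ?thesis using img inj by (simp add: card_image U'_def)
qed

lemma rot_nth: "length w = n \<Longrightarrow> k < n \<Longrightarrow> m < n \<Longrightarrow>
  rotate k w ! m = w ! (if k + m < n then k + m else k + m - n)"
proof -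
  assume a: "length w = n" "k < n" "m < n"
  have "rotate k w ! m = w ! ((k + m) mod n)" using a by (simp add: nth_rotate)
  moreover have "(k + m) mod n = (if k + m < n then k + m else k + m - n)"
    using a by (auto simp: mod_if)
  ultimately show ?thesis by simp
qed

lemma four_cases: "(x::nat) < 4 \<Longrightarrow> x = 0 \<or> x = 1 \<or> x = 2 \<or> x = 3" by arith

lemma cv1234:
  "contains_vinc \<tau> [1,2,3,4] {0} \<longleftrightarrow>
   (\<exists>i l1 l2. Suc i < l1 \<and> l1 < l2 \<and> l2 < length \<tau> \<and>
       \<tau>!i < \<tau>!Suc i \<and> \<tau>!Suc i < \<tau>!l1 \<and> \<tau>!l1 < \<tau>!l2)"
proof
  assume "contains_vinc \<tau> [1,2,3,4] {0}"
  then obtain "is" where h: "length is = length [1,2,3,4::nat]" "sorted_wrt (<) is" "\<forall>j\<in>set is. j < length \<tau>"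
    "\<forall>a<length [1,2,3,4::nat]. \<forall>b<length [1,2,3,4::nat]. (\<tau> ! (is ! a) < \<tau> ! (is ! b)) \<longleftrightarrow> ([1,2,3,4::nat] ! a < [1,2,3,4] ! b)"
    "\<forall>i\<in>{0::nat}. Suc i < length [1,2,3,4::nat] \<longrightarrow> is ! Suc i = Suc (is ! i)"
    unfolding contains_vinc_def by blast
  have H: "(\<tau> ! (is ! x) < \<tau> ! (is ! y)) \<longleftrightarrow> ([1,2,3,4::nat] ! x < [1,2,3,4] ! y)" if "x < 4" "y < 4" for x y
    using h(4) that by simp
  obtain a b c d where isd: "is = [a,b,c,d]" using h(1)
    by (auto simp: length_Suc_conv)
  have o1: "\<tau>!a < \<tau>!b" using H[of 0 1] isd by simp
  have o2: "\<tau>!b < \<tau>!c" using H[of 1 2] isd by simp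
  have o3: "\<tau>!c < \<tau>!d" using H[of 2 3] isd by simp
  show "\<exists>i l1 l2. Suc i < l1 \<and> l1 < l2 \<and> l2 < length \<tau> \<and>
       \<tau>!i < \<tau>!Suc i \<and> \<tau>!Suc i < \<tau>!l1 \<and> \<tau>!l1 < \<tau>!l2"
    using h(2,3,5) isd o1 o2 o3 by (intro exI[of _ a] exI[of _ c] exI[of _ d]) auto
next
  assume "\<exists>i l1 l2. Suc i < l1 \<and> l1 < l2 \<and> l2 < length \<tau> \<and>
       \<tau>!i < \<tau>!Suc i \<and> \<tau>!Suc i < \<tau>!l1 \<and> \<tau>!l1 < \<tau>!l2"
  then obtain i l1 l2 where h: "Suc i < l1" "l1 < l2" "l2 < length \<tau>"
       "\<tau>!i < \<tau>!Suc i" "\<tau>!Suc i < \<tau>!l1" "\<tau>!l1 < \<tau>!l2" by blast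
  let ?is = "[i, Suc i, l1, l2]"
  have ord: "(\<tau> ! (?is ! x) < \<tau> ! (?is ! y)) \<longleftrightarrow> ([1,2,3,4::nat] ! x < [1,2,3,4] ! y)"
    if "x < 4" "y < 4" for x y
    using four_cases[OF that(1)] four_cases[OF that(2)] h(4-6) by auto
  show "contains_vinc \<tau> [1,2,3,4] {0}"
    unfolding contains_vinc_def
    apply (rule exI[of _ ?is])
    using h ord by auto
qed

lemma cv1243:
  "contains_vinc \<tau> [1,2,4,3] {0} \<longleftrightarrow>
   (\<exists>i l1 l2. Suc i < l1 \<and> l1 < l2 \<and> l2 < length \<tau> \<and>
       \<tau>!i < \<tau>!Suc i \<and> \<tau>!Suc i < \<tau>!l2 \<and> \<tau>!l2 < \<tau>!l1)"
proof
  assume "contains_vinc \<tau> [1,2,4,3] {0}"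
  then obtain "is" where h: "length is = length [1,2,4,3::nat]" "sorted_wrt (<) is" "\<forall>j\<in>set is. j < length \<tau>"
    "\<forall>a<length [1,2,4,3::nat]. \<forall>b<length [1,2,4,3::nat]. (\<tau> ! (is ! a) < \<tau> ! (is ! b)) \<longleftrightarrow> ([1,2,4,3::nat] ! a < [1,2,4,3] ! b)"
    "\<forall>i\<in>{0::nat}. Suc i < length [1,2,4,3::nat] \<longrightarrow> is ! Suc i = Suc (is ! i)"
    unfolding contains_vinc_def by blast
  have H: "(\<tau> ! (is ! x) < \<tau> ! (is ! y)) \<longleftrightarrow> ([1,2,4,3::nat] ! x < [1,2,4,3] ! y)" if "x < 4" "y < 4" for x y
    using h(4) that by simp
  obtain a b c d where isd: "is = [a,b,c,d]" using h(1)
    by (auto simp: length_Suc_conv)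
  have o1: "\<tau>!a < \<tau>!b" using H[of 0 1] isd by simp
  have o2: "\<tau>!b < \<tau>!d" using H[of 1 3] isd by simp
  have o3: "\<tau>!d < \<tau>!c" using H[of 3 2] isd by simp
  show "\<exists>i l1 l2. Suc i < l1 \<and> l1 < l2 \<and> l2 < length \<tau> \<and>
       \<tau>!i < \<tau>!Suc i \<and> \<tau>!Suc i < \<tau>!l2 \<and> \<tau>!l2 < \<tau>!l1"
    using h(2,3,5) isd o1 o2 o3 by (intro exI[of _ a] exI[of _ c] exI[of _ d]) auto
next
  assume "\<exists>i l1 l2. Suc i < l1 \<and> l1 < l2 \<and> l2 < length \<tau> \<and>
       \<tau>!i < \<tau>!Suc i \<and> \<tau>!Suc i < \<tau>!l2 \<and> \<tau>!l2 < \<tau>!l1"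
  then obtain i l1 l2 where h: "Suc i < l1" "l1 < l2" "l2 < length \<tau>"
       "\<tau>!i < \<tau>!Suc i" "\<tau>!Suc i < \<tau>!l2" "\<tau>!l2 < \<tau>!l1" by blast
  let ?is = "[i, Suc i, l1, l2]"
  have ord: "(\<tau> ! (?is ! x) < \<tau> ! (?is ! y)) \<longleftrightarrow> ([1,2,4,3::nat] ! x < [1,2,4,3] ! y)"
    if "x < 4" "y < 4" for x y
    using four_cases[OF that(1)] four_cases[OF that(2)] h(4-6) by auto
  show "contains_vinc \<tau> [1,2,4,3] {0}"
    unfolding contains_vinc_def
    apply (rule exI[of _ ?is])
    using h ord by auto
qed

definition V1 :: "nat \<Rightarrow> nat list \<Rightarrow> bool" where
  "V1 n w \<longleftrightarrow> (\<forall>j. 1 \<le> j \<longrightarrow> Suc j < n \<longrightarrow> w!j < w!Suc j \<longrightarrow>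
     (\<forall>t. Suc j < t \<longrightarrow> t < n \<longrightarrow> w!t < w!Suc j) \<and>
     (\<forall>s t. 1 \<le> s \<longrightarrow> s < t \<longrightarrow> t < j \<longrightarrow> \<not> (w!Suc j < w!s \<and> w!s < w!t)))"

definition V2 :: "nat \<Rightarrow> nat list \<Rightarrow> bool" where
  "V2 n w \<longleftrightarrow> (\<forall>j. 1 \<le> j \<longrightarrow> Suc j < n \<longrightarrow> w!j < w!Suc j \<longrightarrow>
     (\<forall>s. 1 \<le> s \<longrightarrow> s < j \<longrightarrow> w!s < w!Suc j) \<and>
     (\<forall>s t. Suc j < s \<longrightarrow> s < t \<longrightarrow> t < n \<longrightarrow> \<not> (w!Suc j < w!t \<and> w!t < w!s)))"

lemma cyc1:
  assumes L: "length w = n" "distinct w" "w!0 = n" "\<forall>i<n. w!i \<le> n"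
  shows "(\<exists>k<n. contains_vinc (rotate k w) [1,2,3,4] {0}) \<longleftrightarrow> \<not> V1 n w"
proof
  assume "\<exists>k<n. contains_vinc (rotate k w) [1,2,3,4] {0}"
  then obtain k where k: "k < n" and kc: "contains_vinc (rotate k w) [1,2,3,4] {0}" by blast
  from kc[unfolded cv1234] obtain i l1 l2 where h: "Suc i < l1" "l1 < l2" "l2 < n"
    "rotate k w!i < rotate k w!Suc i" "rotate k w!Suc i < rotate k w!l1" "rotate k w!l1 < rotate k w!l2"
    using L(1) by auto
  let ?g = "\<lambda>m. if k + m < n then k + m else k + m - n"
  have g: "rotate k w ! m = w ! ?g m" if "m < n" for m using rot_nth[OF L(1) k that] .
  have A: "w ! ?g i < w ! ?g (Suc i)" "w ! ?g (Suc i) < w ! ?g l1" "w ! ?g l1 < w ! ?g l2"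
    using h g by auto
  have le: "w ! ?g l2 \<le> n" using L(4) h k by auto
  show "\<not> V1 n w"
  proof
    assume V: "V1 n w"
    have Vj: "(\<forall>t. Suc j < t \<longrightarrow> t < n \<longrightarrow> w!t < w!Suc j) \<and>
     (\<forall>s t. 1 \<le> s \<longrightarrow> s < t \<longrightarrow> t < j \<longrightarrow> \<not> (w!Suc j < w!s \<and> w!s < w!t))"
      if "1 \<le> j" "Suc j < n" "w!j < w!Suc j" for j
      using V that unfolding V1_def by blast
    consider (a) "k + l2 < n" | (b) "n \<le> k + i" | (c) "k + i < n" "k + Suc i = n"
      | (d) "k + Suc i < n" "n \<le> k + l2" using h by linarith
    then show False
    proof cases
      case a
      then have B: "w!(k+i) < w!Suc (k+i)" "w!Suc (k+i) < w!(k+l1)" "w!(k+l1) < w!(k+l2)" "w!(k+l2) \<le> n"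
        using A le h by auto
      have "k + i \<noteq> 0" using B L(3) by (metis le_antisym less_imp_le_nat less_not_refl order.strict_trans)
      then have "1 \<le> k+i" by arith
      moreover have "Suc (k+i) < n" using a h by simp
      ultimately have "\<forall>t. Suc (k+i) < t \<longrightarrow> t < n \<longrightarrow> w!t < w!Suc (k+i)"
        using Vj[of "k+i"] B by blast
      then have "w!(k+l1) < w!Suc (k+i)" using a h by simp
      then show False using B by simp
    next
      case b
      then have B: "w!(k+i-n) < w!Suc (k+i-n)" "w!Suc (k+i-n) < w!(k+l1-n)" "w!(k+l1-n) < w!(k+l2-n)"
         "w!(k+l2-n) \<le> n"
        using A le h by (auto simp: Suc_diff_le)
      have "k + i - n \<noteq> 0" using B L(3) by (metis le_antisym less_imp_le_nat less_not_refl order.strict_trans)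
      moreover have "Suc (k+i-n) < n" using h k by linarith
      ultimately have "\<forall>t. Suc (k+i-n) < t \<longrightarrow> t < n \<longrightarrow> w!t < w!Suc (k+i-n)"
        using Vj[of "k+i-n"] B by (metis One_nat_def less_one not_le)
      moreover have "Suc (k+i-n) < k+l1-n" "k+l1-n < n" using h k b by linarith+
      ultimately have "w!(k+l1-n) < w!Suc (k+i-n)" by simp
      then show False using B by simp
    next
      case c
      then have "w ! ?g (Suc i) = n" using L(3) by simp
      moreover have "w ! ?g l1 \<le> n" using L(4) h k by auto
      ultimately show False using A by simp
    next
      case d
      then have B: "w!(k+i) < w!Suc (k+i)" "w!(k+l2-n) \<le> n" using A le h by auto
      have j0: "k + i \<noteq> 0"
      proof
        assume "k + i = 0"
        then have "n < w ! ?g (Suc i)" using B L(3) d by simp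
        moreover have "w ! ?g (Suc i) \<le> n" using L(4) h d by auto
        ultimately show False by simp
      qed
      have j1: "1 \<le> k+i" using j0 by arith
      have j2: "Suc (k+i) < n" using d by simp
      show False
      proof (cases "k + l1 < n")
        case True
        then have C: "w!Suc (k+i) < w!(k+l1)" using A d by auto
        have "1 \<le> k+i" using j0 by arith
        moreover have "Suc (k+i) < n" using d by simp
        ultimately have "\<forall>t. Suc (k+i) < t \<longrightarrow> t < n \<longrightarrow> w!t < w!Suc (k+i)"
          using Vj[of "k+i"] B d by blast
        then have "w!(k+l1) < w!Suc (k+i)" using True h by simp
        then show False using C by simp
      next
        case False
        have "k + l1 \<noteq> n"
        proof
          assume "k + l1 = n"
          then have "w ! ?g l1 = n" using L(3) by simp
          then show False using A le by simp
        qed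
        then have C: "w!Suc (k+i) < w!(k+l1-n)" "w!(k+l1-n) < w!(k+l2-n)" "1 \<le> k+l1-n"
          using A d False h by auto
        have "\<forall>s t. 1 \<le> s \<longrightarrow> s < t \<longrightarrow> t < k+i \<longrightarrow> \<not> (w!Suc (k+i) < w!s \<and> w!s < w!t)"
          using Vj[of "k+i"] B j1 j2 by blast
        moreover have "k+l1-n < k+l2-n" "k+l2-n < k+i" using h d False by linarith+
        ultimately show False using C by blast
      qed
    qed
  qed
next
  assume "\<not> V1 n w"
  then obtain j where j: "1 \<le> j" "Suc j < n" "w!j < w!Suc j" and
    viol: "(\<exists>t. Suc j < t \<and> t < n \<and> \<not> w!t < w!Suc j) \<or>
     (\<exists>s t. 1 \<le> s \<and> s < t \<and> t < j \<and> w!Suc j < w!s \<and> w!s < w!t)"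
    unfolding V1_def by blast
  have jn: "j < n" using j by simp
  have r: "rotate j w ! m = w ! (if j + m < n then j + m else j + m - n)" if "m < n" for m
    using rot_nth[OF L(1) jn that] .
  from viol show "\<exists>k<n. contains_vinc (rotate k w) [1,2,3,4] {0}"
  proof
    assume "\<exists>t. Suc j < t \<and> t < n \<and> \<not> w!t < w!Suc j"
    then obtain t where t: "Suc j < t" "t < n" "\<not> w!t < w!Suc j" by blast
    have "w!t \<noteq> w!Suc j" using L(1,2) t j by (simp add: nth_eq_iff_index_eq)
    then have t2: "w!Suc j < w!t" using t by simp
    have "w!t \<noteq> w!0" using L(1,2) t by (simp add: nth_eq_iff_index_eq)
    then have t3: "w!t < n" using L(3,4) t by (metis le_neq_implies_less)
    have "contains_vinc (rotate j w) [1,2,3,4] {0}"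
      unfolding cv1234
      apply (rule exI[of _ 0], rule exI[of _ "t - j"], rule exI[of _ "n - j"])
      using j t t2 t3 r[of 0] r[of 1] r[of "t-j"] r[of "n-j"] L by auto
    then show ?thesis using jn by blast
  next
    assume "\<exists>s t. 1 \<le> s \<and> s < t \<and> t < j \<and> w!Suc j < w!s \<and> w!s < w!t"
    then obtain s t where st: "1 \<le> s" "s < t" "t < j" "w!Suc j < w!s" "w!s < w!t" by blast
    have "contains_vinc (rotate j w) [1,2,3,4] {0}"
      unfolding cv1234
      apply (rule exI[of _ 0], rule exI[of _ "s + n - j"], rule exI[of _ "t + n - j"])
      using j st r[of 0] r[of 1] r[of "s + n - j"] r[of "t + n - j"] L by auto
    then show ?thesis using jn by blast
  qed
qed

lemma cyc2:
  assumes L: "length w = n" "distinct w" "w!0 = n" "\<forall>i<n. w!i \<le> n"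
  shows "(\<exists>k<n. contains_vinc (rotate k w) [1,2,4,3] {0}) \<longleftrightarrow> \<not> V2 n w"
proof
  assume "\<exists>k<n. contains_vinc (rotate k w) [1,2,4,3] {0}"
  then obtain k where k: "k < n" and kc: "contains_vinc (rotate k w) [1,2,4,3] {0}" by blast
  from kc[unfolded cv1243] obtain i l1 l2 where h: "Suc i < l1" "l1 < l2" "l2 < n"
    "rotate k w!i < rotate k w!Suc i" "rotate k w!Suc i < rotate k w!l2" "rotate k w!l2 < rotate k w!l1"
    using L(1) by auto
  let ?g = "\<lambda>m. if k + m < n then k + m else k + m - n"
  have g: "rotate k w ! m = w ! ?g m" if "m < n" for m using rot_nth[OF L(1) k that] .
  have A: "w ! ?g i < w ! ?g (Suc i)" "w ! ?g (Suc i) < w ! ?g l2" "w ! ?g l2 < w ! ?g l1"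
    using h g by auto
  have le: "w ! ?g l1 \<le> n" using L(4) h k by auto
  show "\<not> V2 n w"
  proof
    assume V: "V2 n w"
    have Vj: "(\<forall>s. 1 \<le> s \<longrightarrow> s < j \<longrightarrow> w!s < w!Suc j) \<and>
     (\<forall>s t. Suc j < s \<longrightarrow> s < t \<longrightarrow> t < n \<longrightarrow> \<not> (w!Suc j < w!t \<and> w!t < w!s))"
      if "1 \<le> j" "Suc j < n" "w!j < w!Suc j" for j
      using V that unfolding V2_def by blast
    consider (a) "k + l2 < n" | (b) "n \<le> k + i" | (c) "k + i < n" "k + Suc i = n"
      | (d) "k + Suc i < n" "n \<le> k + l2" using h by linarith
    then show False
    proof cases
      case a
      then have B: "w!(k+i) < w!Suc (k+i)" "w!Suc (k+i) < w!(k+l2)" "w!(k+l2) < w!(k+l1)" "w!(k+l1) \<le> n"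
        using A le h by auto
      have "k + i \<noteq> 0" using B L(3) by (metis le_antisym less_imp_le_nat less_not_refl order.strict_trans)
      then have "1 \<le> k+i" by arith
      moreover have "Suc (k+i) < n" using a h by simp
      ultimately have "\<forall>s t. Suc (k+i) < s \<longrightarrow> s < t \<longrightarrow> t < n \<longrightarrow> \<not> (w!Suc (k+i) < w!t \<and> w!t < w!s)"
        using Vj[of "k+i"] B by blast
      moreover have "Suc (k+i) < k+l1" "k+l1 < k+l2" "k+l2 < n" using a h by simp_all
      ultimately show False using B by blast
    next
      case b
      then have B: "w!(k+i-n) < w!Suc (k+i-n)" "w!Suc (k+i-n) < w!(k+l2-n)" "w!(k+l2-n) < w!(k+l1-n)"
         "w!(k+l1-n) \<le> n"
        using A le h by (auto simp: Suc_diff_le)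
      have "k + i - n \<noteq> 0" using B L(3) by (metis le_antisym less_imp_le_nat less_not_refl order.strict_trans)
      then have "1 \<le> k+i-n" by arith
      moreover have "Suc (k+i-n) < n" using h k by linarith
      ultimately have "\<forall>s t. Suc (k+i-n) < s \<longrightarrow> s < t \<longrightarrow> t < n \<longrightarrow> \<not> (w!Suc (k+i-n) < w!t \<and> w!t < w!s)"
        using Vj[of "k+i-n"] B by blast
      moreover have "Suc (k+i-n) < k+l1-n" "k+l1-n < k+l2-n" "k+l2-n < n" using h k b by linarith+
      ultimately show False using B by blast
    next
      case c
      then have "w ! ?g (Suc i) = n" using L(3) by simp
      moreover have "w ! ?g l2 \<le> n" using L(4) h k by auto
      ultimately show False using A by simp
    next
      case d
      then have B: "w!(k+i) < w!Suc (k+i)" using A h by auto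
      have j0: "k + i \<noteq> 0"
      proof
        assume "k + i = 0"
        then have "n < w ! ?g (Suc i)" using B L(3) d by simp
        moreover have "w ! ?g (Suc i) \<le> n" using L(4) h d by auto
        ultimately show False by simp
      qed
      have j1: "1 \<le> k+i" using j0 by arith
      have j2: "Suc (k+i) < n" using d by simp
      have "k + l2 \<noteq> n"
      proof
        assume "k + l2 = n"
        then have "w ! ?g l2 = n" using L(3) by simp
        then show False using A le by simp
      qed
      then have C: "w!Suc (k+i) < w!(k+l2-n)" "1 \<le> k+l2-n" "k+l2-n < k+i"
        using A d h by auto
      have "\<forall>s. 1 \<le> s \<longrightarrow> s < k+i \<longrightarrow> w!s < w!Suc (k+i)"
        using Vj[of "k+i"] B j1 j2 by blast
      then show False using C by force
    qed
  qed
next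
  assume "\<not> V2 n w"
  then obtain j where j: "1 \<le> j" "Suc j < n" "w!j < w!Suc j" and
    viol: "(\<exists>s. 1 \<le> s \<and> s < j \<and> \<not> w!s < w!Suc j) \<or>
     (\<exists>s t. Suc j < s \<and> s < t \<and> t < n \<and> w!Suc j < w!t \<and> w!t < w!s)"
    unfolding V2_def by blast
  have jn: "j < n" using j by simp
  have r: "rotate j w ! m = w ! (if j + m < n then j + m else j + m - n)" if "m < n" for m
    using rot_nth[OF L(1) jn that] .
  from viol show "\<exists>k<n. contains_vinc (rotate k w) [1,2,4,3] {0}"
  proof
    assume "\<exists>s. 1 \<le> s \<and> s < j \<and> \<not> w!s < w!Suc j"
    then obtain s where s: "1 \<le> s" "s < j" "\<not> w!s < w!Suc j" by blast
    have "w!s \<noteq> w!Suc j" using L(1,2) s j by (simp add: nth_eq_iff_index_eq)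
    then have t2: "w!Suc j < w!s" using s by simp
    have "w!s \<noteq> w!0" using L(1,2) s j by (simp add: nth_eq_iff_index_eq)
    then have t3: "w!s < n" using L(3,4) s j by (metis le_neq_implies_less less_trans Suc_lessD)
    have "contains_vinc (rotate j w) [1,2,4,3] {0}"
      unfolding cv1243
      apply (rule exI[of _ 0], rule exI[of _ "n - j"], rule exI[of _ "s + n - j"])
      using j s t2 t3 r[of 0] r[of 1] r[of "n-j"] r[of "s + n - j"] L by auto
    then show ?thesis using jn by blast
  next
    assume "\<exists>s t. Suc j < s \<and> s < t \<and> t < n \<and> w!Suc j < w!t \<and> w!t < w!s"
    then obtain s t where st: "Suc j < s" "s < t" "t < n" "w!Suc j < w!t" "w!t < w!s" by blast
    have "contains_vinc (rotate j w) [1,2,4,3] {0}"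
      unfolding cv1243
      apply (rule exI[of _ 0], rule exI[of _ "s - j"], rule exI[of _ "t - j"])
      using j st r[of 0] r[of 1] r[of "s - j"] r[of "t - j"] L by auto
    then show ?thesis using jn by blast
  qed
qed

lemma sorted_filter_nth:
  "sorted_wrt R (filter P xs) = (\<forall>i j. i < j \<longrightarrow> j < length xs \<longrightarrow> P (xs!i) \<longrightarrow> P (xs!j) \<longrightarrow> R (xs!i) (xs!j))"
proof (induction xs)
  case Nil then show ?case by simp
next
  case (Cons a xs)
  have "sorted_wrt R (filter P (a # xs)) =
    ((P a \<longrightarrow> (\<forall>y\<in>set xs. P y \<longrightarrow> R a y)) \<and> sorted_wrt R (filter P xs))" by auto
  also have "\<dots> = ((\<forall>j. j < length xs \<longrightarrow> P a \<longrightarrow> P (xs!j) \<longrightarrow> R a (xs!j)) \<and>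
      (\<forall>i j. i < j \<longrightarrow> j < length xs \<longrightarrow> P (xs!i) \<longrightarrow> P (xs!j) \<longrightarrow> R (xs!i) (xs!j)))"
    using Cons by (auto simp: in_set_conv_nth) (metis nth_mem)
  also have "\<dots> = (\<forall>i j. i < j \<longrightarrow> j < length (a#xs) \<longrightarrow> P ((a#xs)!i) \<longrightarrow> P ((a#xs)!j) \<longrightarrow> R ((a#xs)!i) ((a#xs)!j))"
  proof
    assume h: "(\<forall>j. j < length xs \<longrightarrow> P a \<longrightarrow> P (xs!j) \<longrightarrow> R a (xs!j)) \<and>
      (\<forall>i j. i < j \<longrightarrow> j < length xs \<longrightarrow> P (xs!i) \<longrightarrow> P (xs!j) \<longrightarrow> R (xs!i) (xs!j))"
    show "\<forall>i j. i < j \<longrightarrow> j < length (a#xs) \<longrightarrow> P ((a#xs)!i) \<longrightarrow> P ((a#xs)!j) \<longrightarrow> R ((a#xs)!i) ((a#xs)!j)"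
    proof (intro allI impI)
      fix i j assume ij: "i < j" "j < length (a#xs)" "P ((a#xs)!i)" "P ((a#xs)!j)"
      obtain j' where j': "j = Suc j'" using ij by (cases j) auto
      show "R ((a#xs)!i) ((a#xs)!j)"
      proof (cases i)
        case 0 then show ?thesis using h ij j' by auto
      next
        case (Suc i') then show ?thesis using h ij j' by auto
      qed
    qed
  next
    assume h: "\<forall>i j. i < j \<longrightarrow> j < length (a#xs) \<longrightarrow> P ((a#xs)!i) \<longrightarrow> P ((a#xs)!j) \<longrightarrow> R ((a#xs)!i) ((a#xs)!j)"
    show "(\<forall>j. j < length xs \<longrightarrow> P a \<longrightarrow> P (xs!j) \<longrightarrow> R a (xs!j)) \<and>
      (\<forall>i j. i < j \<longrightarrow> j < length xs \<longrightarrow> P (xs!i) \<longrightarrow> P (xs!j) \<longrightarrow> R (xs!i) (xs!j))"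
    proof
      show "\<forall>j. j < length xs \<longrightarrow> P a \<longrightarrow> P (xs!j) \<longrightarrow> R a (xs!j)"
        using h[rule_format, of 0 "Suc _"] by auto
      show "\<forall>i j. i < j \<longrightarrow> j < length xs \<longrightarrow> P (xs!i) \<longrightarrow> P (xs!j) \<longrightarrow> R (xs!i) (xs!j)"
        using h[rule_format, of "Suc _" "Suc _"] by auto
    qed
  qed
  finally show ?case .
qed

lemma sorted_gt_unique: "sorted_wrt (>) xs \<Longrightarrow> set xs = {a..<b} \<Longrightarrow> xs = rev [a..<b]"
proof -
  assume a: "sorted_wrt (>) xs" "set xs = {a..<b}"
  have "sorted_wrt (<) (rev xs)" using a by (simp add: sorted_wrt_rev)
  then have "sorted (rev xs)" "distinct (rev xs)" by (simp_all add: strict_sorted_iff)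
  then have "rev xs = [a..<b]" using a by (intro sorted_distinct_set_unique) auto
  then show ?thesis by (metis rev_rev_ident)
qed

lemma sorted_lt_unique: "sorted_wrt (<) xs \<Longrightarrow> set xs = {a..<b} \<Longrightarrow> xs = [a..<b]"
proof -
  assume a: "sorted_wrt (<) xs" "set xs = {a..<b}"
  then have "sorted xs" "distinct xs" by (simp_all add: strict_sorted_iff)
  then show "xs = [a..<b]" using a by (intro sorted_distinct_set_unique) auto
qed

lemma set_filter_in: "set (filter (\<lambda>x. x \<in> A) w) = set w \<inter> A" by auto

definition A1 :: "nat \<Rightarrow> nat \<Rightarrow> nat list set" where
  "A1 n b = {w \<in> WW (rev [b..<Suc n]) {1..<b}. b < n \<longrightarrow> \<not> (\<exists>p q. w = p @ Suc b # b # q)}"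

definition A2 :: "nat \<Rightarrow> nat \<Rightarrow> nat list set" where
  "A2 n b = {w \<in> WW (n # [b..<n]) {1..<b}. b < n \<longrightarrow> \<not> (\<exists>p q. w = p @ n # b # q)}"

lemma decomp_nth: "w = p @ x # y # q \<Longrightarrow> w!length p = x \<and> w!Suc (length p) = y \<and> Suc (length p) < length w"
  by (simp add: nth_append)

lemma nth_decomp: "Suc i < length w \<Longrightarrow> w = take i w @ w!i # w!Suc i # drop (Suc (Suc i)) w"
  by (metis Cons_nth_drop_Suc Suc_lessD append_take_drop_id)

lemma WW_pos: "w \<in> WW U S \<Longrightarrow> sorted_wrt R U \<Longrightarrow>
  i < j \<Longrightarrow> j < length w \<Longrightarrow> w!i \<in> set U \<Longrightarrow> w!j \<in> set U \<Longrightarrow> R (w!i) (w!j)"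
proof -
  assume a: "w \<in> WW U S" "sorted_wrt R U" "i < j" "j < length w" "w!i \<in> set U" "w!j \<in> set U"
  have "sorted_wrt R (filter (\<lambda>x. x \<in> set U) w)" using a by (simp add: WW_def)
  then show ?thesis using a(3-6) unfolding sorted_filter_nth by blast
qed

lemma WW_na: "w \<in> WW U S \<Longrightarrow> Suc i < length w \<Longrightarrow> w!i < w!Suc i \<Longrightarrow> w!Suc i \<in> set U"
  by (auto simp: WW_def na_nth)

lemma char1:
  assumes L: "length w = n" "distinct w" "set w = {1..n}" "w!0 = n" "2 \<le> n"
  shows "V1 n w \<longleftrightarrow> (\<exists>b\<in>{1..n}. w \<in> A1 n b)"
proof -
  have vals: "1 \<le> w!i \<and> w!i \<le> n" if "i < n" for i
    using L(1,3) nth_mem[of i w] that by auto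
  have dist: "i = j" if "i < n" "j < n" "w!i = w!j" for i j
    using L(1,2) that nth_eq_iff_index_eq by blast
  have wne: "w \<noteq> []" using L by auto
  have hdw: "hd w = n" using L(4) hd_conv_nth[OF wne] by simp
  show ?thesis
  proof
    assume V: "V1 n w"
    define T where "T = {w!Suc j | j. 1 \<le> j \<and> Suc j < n \<and> w!j < w!Suc j}"
    define b where "b = Min (insert n T)"
    have Tsub: "T \<subseteq> {1..n}" using vals unfolding T_def by fastforce
    then have finT: "finite T" by (meson finite_atLeastAtMost finite_subset)
    have bin: "b \<in> insert n T" unfolding b_def using finT by (intro Min_in) auto
    have bmin: "b \<le> x" if "x \<in> T" for x unfolding b_def using finT that by (intro Min_le) auto
    have bn: "b \<le> n" unfolding b_def using finT by (intro Min_le) auto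
    have b1: "1 \<le> b" using bin Tsub L(5) by auto
    define U where "U = rev [b..<Suc n]"
    have setU: "set U = {b..<Suc n}" unfolding U_def by (simp only: set_rev set_upt)
    have na: "na (set U) w"
      unfolding na_nth
    proof (intro allI impI)
      fix i assume i: "Suc i < length w" "w!i < w!Suc i"
      have "i \<noteq> 0"
      proof
        assume "i = 0" then show False using i vals[of "Suc 0"] L by simp
      qed
      then have "w!Suc i \<in> T" unfolding T_def using i L(1) by force
      then show "w!Suc i \<in> set U" using bmin vals[of "Suc i"] i L(1) setU by auto
    qed
    have P1: "w!j < w!i" if ij: "i < j" "j < n" "b \<le> w!i" "b \<le> w!j" for i j
    proof (cases "b = n")
      case True
      then have "w!i = w!j" using vals[of i] vals[of j] ij by simp
      then show ?thesis using dist[of i j] ij by simp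
    next
      case False
      then have "b \<in> T" using bin by simp
      then obtain j0 where j0: "1 \<le> j0" "Suc j0 < n" "w!j0 < w!Suc j0" "b = w!Suc j0"
        unfolding T_def by blast
      have Vi: "\<forall>t. Suc j0 < t \<longrightarrow> t < n \<longrightarrow> w!t < b" using V j0 unfolding V1_def by metis
      have Vii: "\<forall>s t. 1 \<le> s \<longrightarrow> s < t \<longrightarrow> t < j0 \<longrightarrow> \<not> (b < w!s \<and> w!s < w!t)"
        using V j0 unfolding V1_def by metis
      have jle: "j \<le> Suc j0" using Vi ij by (meson leD le_less_linear)
      show ?thesis
      proof (cases "j = Suc j0")
        case True
        then have "w!i \<noteq> b" using dist[of i j] ij j0 by auto
        then show ?thesis using ij True j0 by simp
      next
        case False
        have "j \<noteq> j0" using ij j0 by auto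
        then have jj0: "j < j0" using jle False by simp
        show ?thesis
        proof (cases "i = 0")
          case True
          have "w!j \<noteq> n" using dist[of 0 j] ij L(4) by auto
          then show ?thesis using True L(4) vals[of j] ij by simp
        next
          case False
          have "w!i \<noteq> b" using dist[of i "Suc j0"] ij j0 jj0 by auto
          then have "b < w!i" using ij by simp
          then have "\<not> w!i < w!j" using Vii False ij jj0 by (metis One_nat_def less_one not_le)
          moreover have "w!i \<noteq> w!j" using dist[of i j] ij by auto
          ultimately show ?thesis by simp
        qed
      qed
    qed
    have sf: "sorted_wrt (>) (filter (\<lambda>x. x \<in> set U) w)"
      unfolding sorted_filter_nth using P1 L(1) setU by auto
    have "set (filter (\<lambda>x. x \<in> set U) w) = {b..<Suc n}" using L(3) setU b1 by auto
    then have fU: "filter (\<lambda>x. x \<in> set U) w = U" using sf sorted_gt_unique U_def by blast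
    have "w \<in> WW U {1..<b}"
      unfolding WW_def using L(2,3) wne hdw na fU setU b1 bn by auto
    moreover have "\<not> (\<exists>p q. w = p @ Suc b # b # q)" if "b < n"
    proof
      assume "\<exists>p q. w = p @ Suc b # b # q"
      then obtain p q where pq: "w = p @ Suc b # b # q" by blast
      have "b \<in> T" using bin that by auto
      then obtain j0 where j0: "1 \<le> j0" "Suc j0 < n" "w!j0 < w!Suc j0" "b = w!Suc j0"
        unfolding T_def by blast
      have d: "w!length p = Suc b" "w!Suc (length p) = b" "Suc (length p) < n"
        using decomp_nth[OF pq] L(1) by auto
      then have "Suc (length p) = Suc j0" using dist j0 by metis
      then show False using d j0 by simp
    qed
    ultimately have "w \<in> A1 n b" unfolding A1_def U_def by blast
    then show "\<exists>b\<in>{1..n}. w \<in> A1 n b" using b1 bn by auto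
  next
    assume "\<exists>b\<in>{1..n}. w \<in> A1 n b"
    then obtain b where b: "b \<in> {1..n}" "w \<in> A1 n b" by blast
    define U where "U = rev [b..<Suc n]"
    have setU: "set U = {b..<Suc n}" unfolding U_def by (simp only: set_rev set_upt)
    have wW: "w \<in> WW U {1..<b}" using b by (simp add: A1_def U_def)
    have srt: "sorted_wrt (>) U" using sorted_wrt_upt[of b "Suc n"] by (simp only: U_def sorted_wrt_rev)
    have pos: "w!j < w!i" if "i < j" "j < n" "b \<le> w!i" "b \<le> w!j" for i j
      using WW_pos[OF wW srt, of i j] that vals[of i] vals[of j] L(1) setU by auto
    have asc: "b \<le> w!Suc i" if "Suc i < n" "w!i < w!Suc i" for i
      using WW_na[OF wW, of i] that L(1) setU by auto
    show "V1 n w"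
      unfolding V1_def
    proof (intro allI impI conjI)
      fix j t assume j: "1 \<le> j" "Suc j < n" "w!j < w!Suc j" and t: "Suc j < t" "t < n"
      have bj: "b \<le> w!Suc j" using asc j by simp
      show "w!t < w!Suc j"
      proof (cases "b \<le> w!t")
        case True then show ?thesis using pos[of "Suc j" t] t bj by simp
      next
        case False then show ?thesis using bj by simp
      qed
    next
      fix j s t assume j: "1 \<le> j" "Suc j < n" "w!j < w!Suc j" and st: "1 \<le> s" "s < t" "t < j"
      have bj: "b \<le> w!Suc j" using asc j by simp
      show "\<not> (w!Suc j < w!s \<and> w!s < w!t)"
        using pos[of s t] st j bj by auto
    qed
  qed
qed

lemma tl_nth': "w \<noteq> [] \<Longrightarrow> tl w ! i = w ! Suc i" by (cases w) auto

lemma WW2_pos: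
  assumes wW: "w \<in> WW (n # [b..<n]) S" and w0: "w!0 = n"
    and ij: "1 \<le> i" "i < j" "j < length w" "w!i \<in> set (n # [b..<n])" "w!j \<in> set (n # [b..<n])"
  shows "w!i < w!j"
proof -
  let ?P = "\<lambda>x. x \<in> set (n # [b..<n])"
  have wne: "w \<noteq> []" using ij by auto
  then have wc: "w = n # tl w" using w0 by (metis hd_Cons_tl hd_conv_nth)
  have "filter ?P w = n # [b..<n]" using wW by (simp add: WW_def)
  then have "n # filter ?P (tl w) = n # [b..<n]" using wc by (metis filter.simps(2) list.set_intros(1))
  then have "sorted_wrt (<) (filter ?P (tl w))" by simp
  then have H: "\<forall>i j. i < j \<longrightarrow> j < length (tl w) \<longrightarrow> ?P (tl w!i) \<longrightarrow> ?P (tl w!j) \<longrightarrow> tl w!i < tl w!j"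
    unfolding sorted_filter_nth .
  obtain i' j' where e: "i = Suc i'" "j = Suc j'" using ij by (metis Suc_le_D One_nat_def less_imp_le_nat le_trans Suc_le_eq)
  have "tl w ! i' = w!i" "tl w ! j' = w!j" using e wne by (simp_all add: tl_nth')
  moreover have "i' < j'" "j' < length (tl w)" using e ij by auto
  ultimately show ?thesis using H ij by metis
qed

lemma char2:
  assumes L: "length w = n" "distinct w" "set w = {1..n}" "w!0 = n" "2 \<le> n"
  shows "V2 n w \<longleftrightarrow> (\<exists>b\<in>{1..n}. w \<in> A2 n b)"
proof -
  have vals: "1 \<le> w!i \<and> w!i \<le> n" if "i < n" for i
    using L(1,3) nth_mem[of i w] that by auto
  have dist: "i = j" if "i < n" "j < n" "w!i = w!j" for i j
    using L(1,2) that nth_eq_iff_index_eq by blast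
  have wne: "w \<noteq> []" using L by auto
  have hdw: "hd w = n" using L(4) hd_conv_nth[OF wne] by simp
  have wc: "w = n # tl w" using hdw wne by (metis hd_Cons_tl)
  show ?thesis
  proof
    assume V: "V2 n w"
    define T where "T = {w!Suc j | j. 1 \<le> j \<and> Suc j < n \<and> w!j < w!Suc j}"
    define b where "b = Min (insert n T)"
    have Tsub: "T \<subseteq> {1..n}" using vals unfolding T_def by fastforce
    then have finT: "finite T" by (meson finite_atLeastAtMost finite_subset)
    have bin: "b \<in> insert n T" unfolding b_def using finT by (intro Min_in) auto
    have bmin: "b \<le> x" if "x \<in> T" for x unfolding b_def using finT that by (intro Min_le) auto
    have bn: "b \<le> n" unfolding b_def using finT by (intro Min_le) auto
    have b1: "1 \<le> b" using bin Tsub L(5) by auto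
    define U where "U = n # [b..<n]"
    have setU: "set U = insert n {b..<n}" unfolding U_def by simp
    have na: "na (set U) w"
      unfolding na_nth
    proof (intro allI impI)
      fix i assume i: "Suc i < length w" "w!i < w!Suc i"
      have "i \<noteq> 0"
      proof
        assume "i = 0" then show False using i vals[of "Suc 0"] L by simp
      qed
      then have "w!Suc i \<in> T" unfolding T_def using i L(1) by force
      then show "w!Suc i \<in> set U" using bmin vals[of "Suc i"] i L(1) setU by auto
    qed
    have P2: "w!i < w!j" if ij: "1 \<le> i" "i < j" "j < n" "b \<le> w!i" "b \<le> w!j" for i j
    proof (cases "b = n")
      case True
      then have "w!i = w!0" using vals[of i] ij L(4) by simp
      then show ?thesis using dist[of i 0] ij by simp
    next
      case False
      then have "b \<in> T" using bin by simp
      then obtain j0 where j0: "1 \<le> j0" "Suc j0 < n" "w!j0 < w!Suc j0" "b = w!Suc j0"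
        unfolding T_def by blast
      have Vi: "\<forall>s. 1 \<le> s \<longrightarrow> s < j0 \<longrightarrow> w!s < b" using V j0 unfolding V2_def by metis
      have Vii: "\<forall>s t. Suc j0 < s \<longrightarrow> s < t \<longrightarrow> t < n \<longrightarrow> \<not> (b < w!t \<and> w!t < w!s)"
        using V j0 unfolding V2_def by metis
      have "\<not> i < j0" using Vi ij by (meson leD)
      moreover have "i \<noteq> j0" using ij j0 by auto
      ultimately have ige: "Suc j0 \<le> i" by simp
      show ?thesis
      proof (cases "i = Suc j0")
        case True
        then have "w!j \<noteq> b" using dist[of j i] ij j0 by auto
        then show ?thesis using ij True j0 by simp
      next
        case False
        have "w!j \<noteq> b" using dist[of j "Suc j0"] ij j0 ige by auto
        then have "b < w!j" using ij by simp
        then have "\<not> w!j < w!i" using Vii False ij ige by (metis le_neq_implies_less Suc_le_eq)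
        moreover have "w!i \<noteq> w!j" using dist[of i j] ij by auto
        ultimately show ?thesis by simp
      qed
    qed
    let ?P = "\<lambda>x. x \<in> set U"
    have lt: "length (tl w) = n - 1" using L(1) by simp
    have sf: "sorted_wrt (<) (filter ?P (tl w))"
      unfolding sorted_filter_nth
    proof (intro allI impI)
      fix i j assume ij: "i < j" "j < length (tl w)" "?P (tl w ! i)" "?P (tl w ! j)"
      have e: "tl w ! i = w ! Suc i" "tl w ! j = w ! Suc j" using wne by (simp_all add: tl_nth')
      have sl: "Suc i < n" "Suc j < n" using ij lt by auto
      have ne: "w!Suc i \<noteq> n" "w!Suc j \<noteq> n" using dist[of "Suc i" 0] dist[of "Suc j" 0] L(4) sl by auto
      then have "b \<le> w!Suc i" "b \<le> w!Suc j" using ij(3,4) e setU by auto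
      then show "tl w ! i < tl w ! j" using P2[of "Suc i" "Suc j"] ij e sl by simp
    qed
    have ntl: "n \<notin> set (tl w)" using L(2) wc by (metis distinct.simps(2))
    have stl: "set (tl w) = {1..n} - {n}" using L(3) wc ntl by (metis Diff_insert_absorb list.simps(15))
    have "set (filter ?P (tl w)) = {b..<n}" using stl setU b1 by auto
    then have ftl: "filter ?P (tl w) = [b..<n]" using sf sorted_lt_unique by blast
    have "filter ?P w = n # filter ?P (tl w)" using wc setU by (metis filter.simps(2) insertI1)
    then have fU: "filter ?P w = U" using ftl U_def by simp
    have "set w = set U \<union> {1..<b}" using L(3) setU b1 bn by auto
    then have "w \<in> WW U {1..<b}"
      unfolding WW_def using L(2) wne hdw na fU setU by auto
    moreover have "\<not> (\<exists>p q. w = p @ n # b # q)" if "b < n"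
    proof
      assume "\<exists>p q. w = p @ n # b # q"
      then obtain p q where pq: "w = p @ n # b # q" by blast
      have "b \<in> T" using bin that by auto
      then obtain j0 where j0: "1 \<le> j0" "Suc j0 < n" "w!j0 < w!Suc j0" "b = w!Suc j0"
        unfolding T_def by blast
      have d: "w!length p = n" "w!Suc (length p) = b" "Suc (length p) < n"
        using decomp_nth[OF pq] L(1) by auto
      then have "length p = 0" using dist[of "length p" 0] L(4) by simp
      then have "Suc 0 = Suc j0" using dist d j0 by metis
      then show False using j0 by simp
    qed
    ultimately have "w \<in> A2 n b" unfolding A2_def U_def by blast
    then show "\<exists>b\<in>{1..n}. w \<in> A2 n b" using b1 bn by auto
  next
    assume "\<exists>b\<in>{1..n}. w \<in> A2 n b"
    then obtain b where b: "b \<in> {1..n}" "w \<in> A2 n b" by blast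
    define U where "U = n # [b..<n]"
    have setU: "set U = insert n {b..<n}" unfolding U_def by simp
    have wW: "w \<in> WW U {1..<b}" using b by (simp add: A2_def U_def)
    have pos: "w!i < w!j" if "1 \<le> i" "i < j" "j < n" "b \<le> w!i" "b \<le> w!j" for i j
      using WW2_pos[OF wW[unfolded U_def] L(4), of i j] that vals[of i] vals[of j] L(1) setU U_def by (auto simp: order_le_less)
    have asc: "b \<le> w!Suc i" if "Suc i < n" "w!i < w!Suc i" for i
      using WW_na[OF wW, of i] that L(1) setU b by auto
    show "V2 n w"
      unfolding V2_def
    proof (intro allI impI conjI)
      fix j s assume j: "1 \<le> j" "Suc j < n" "w!j < w!Suc j" and s: "1 \<le> s" "s < j"
      have bj: "b \<le> w!Suc j" using asc j by simp
      show "w!s < w!Suc j"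
      proof (rule ccontr)
        assume "\<not> w!s < w!Suc j"
        moreover have "w!s \<noteq> w!Suc j" using dist[of s "Suc j"] s j by auto
        ultimately have "w!Suc j < w!s" by simp
        then show False using pos[of s "Suc j"] s j bj by simp
      qed
    next
      fix j s t assume j: "1 \<le> j" "Suc j < n" "w!j < w!Suc j" and st: "Suc j < s" "s < t" "t < n"
      have bj: "b \<le> w!Suc j" using asc j by simp
      show "\<not> (w!Suc j < w!t \<and> w!t < w!s)"
        using pos[of s t] st j bj by auto
    qed
  qed
qed

lemma cyc_rotate: assumes "xs \<noteq> []" shows "cyc (rotate k xs) = cyc xs"
proof -
  let ?l = "length xs"
  have l: "?l > 0" using assms by simp
  have "cyc (rotate k xs) = {rotate (j + k) xs | j. j < ?l}"
    unfolding cyc_def by (simp add: rotate_rotate)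
  also have "\<dots> = {rotate i xs | i. i < ?l}"
  proof
    show "{rotate (j + k) xs | j. j < ?l} \<subseteq> {rotate i xs | i. i < ?l}"
    proof
      fix y assume "y \<in> {rotate (j + k) xs | j. j < ?l}"
      then obtain j where "y = rotate (j + k) xs" by blast
      then have "y = rotate ((j + k) mod ?l) xs" by (metis rotate_conv_mod)
      then show "y \<in> {rotate i xs | i. i < ?l}" using l by auto
    qed
  next
    show "{rotate i xs | i. i < ?l} \<subseteq> {rotate (j + k) xs | j. j < ?l}"
    proof
      fix y assume "y \<in> {rotate i xs | i. i < ?l}"
      then obtain i where i: "y = rotate i xs" "i < ?l" by blast
      define j where "j = (?l - k mod ?l + i) mod ?l"
      have km: "k mod ?l < ?l" using l by simp
      have "(j + k) mod ?l = (?l - k mod ?l + i + k) mod ?l" unfolding j_def by (simp add: mod_add_left_eq)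
      also have "?l - k mod ?l + i + k = i + ?l * Suc (k div ?l)"
      proof -
        have e: "?l * (k div ?l) + k mod ?l = k" by (rule mult_div_mod_eq)
        show ?thesis using e km unfolding mult_Suc_right by linarith
      qed
      also have "(i + ?l * Suc (k div ?l)) mod ?l = i mod ?l" by (rule mod_mult_self2)
      also have "i mod ?l = i" using i by simp
      finally have "(j + k) mod ?l = i" .
      then have "y = rotate (j + k) xs" using i by (metis rotate_conv_mod)
      moreover have "j < ?l" unfolding j_def using l by simp
      ultimately show "y \<in> {rotate (j + k) xs | j. j < ?l}" by blast
    qed
  qed
  also have "\<dots> = cyc xs" unfolding cyc_def by simp
  finally show ?thesis .
qed

lemma lin_perms_len: "w \<in> lin_perms n \<Longrightarrow> length w = n"
  unfolding lin_perms_def by (metis (mono_tags) card_atLeastAtMost diff_Suc_1 distinct_card mem_Collect_eq)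

lemma card_cycAv:
  assumes n: "1 \<le> n"
  shows "card (cyc_Av n \<pi> adj) = card {w \<in> lin_perms n. hd w = n \<and> \<not> cyc_contains (cyc w) \<pi> adj}"
    (is "_ = card ?H")
proof -
  have img: "cyc_Av n \<pi> adj = cyc ` ?H"
  proof
    show "cyc_Av n \<pi> adj \<subseteq> cyc ` ?H"
    proof
      fix C assume "C \<in> cyc_Av n \<pi> adj"
      then obtain \<sigma> where s: "\<sigma> \<in> lin_perms n" "C = cyc \<sigma>" "\<not> cyc_contains C \<pi> adj"
        unfolding cyc_Av_def cyc_perms_def by blast
      have "n \<in> set \<sigma>" using s n unfolding lin_perms_def by auto
      then obtain k where k: "k < length \<sigma>" "\<sigma>!k = n" by (metis in_set_conv_nth)
      have sne: "\<sigma> \<noteq> []" using k(1) by (metis length_0_conv less_nat_zero_code)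
      define w where "w = rotate k \<sigma>"
      have "w!0 = \<sigma>!((k+0) mod length \<sigma>)" unfolding w_def using k sne by (intro nth_rotate) simp
      then have "w!0 = \<sigma>!k" using k by simp
      then have "hd w = n" using k sne by (simp add: w_def hd_conv_nth)
      moreover have "w \<in> lin_perms n" using s unfolding w_def lin_perms_def by simp
      moreover have "cyc w = C" using s sne unfolding w_def by (simp add: cyc_rotate)
      ultimately show "C \<in> cyc ` ?H" using s by blast
    qed
  next
    show "cyc ` ?H \<subseteq> cyc_Av n \<pi> adj"
      unfolding cyc_Av_def cyc_perms_def by blast
  qed
  have inj: "inj_on cyc ?H"
  proof (rule inj_onI)
    fix w1 w2 assume w1: "w1 \<in> ?H" and w2: "w2 \<in> ?H" and e: "cyc w1 = cyc w2"
    have l1: "length w1 = n" "length w2 = n" using w1 w2 lin_perms_len by auto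
    have "w1 \<in> cyc w1" unfolding cyc_def using l1 n by (auto intro: exI[of _ 0])
    then obtain k where k: "w1 = rotate k w2" "k < length w2" using e unfolding cyc_def by blast
    have "rotate k w2 ! 0 = w2!((k+0) mod length w2)" using l1 n by (intro nth_rotate) simp
    then have "w1!0 = w2!((k+0) mod length w2)" using k(1) by simp
    then have "w1!0 = w2!k" using k by simp
    moreover have ne: "w1 \<noteq> []" "w2 \<noteq> []" using l1 n by auto
    moreover have "hd w1 = n" "hd w2 = n" using w1 w2 by auto
    ultimately have "w1!0 = n" "w2!0 = n" by (simp_all add: hd_conv_nth)
    moreover note \<open>w1!0 = w2!k\<close>
    moreover have "distinct w2" using w2 unfolding lin_perms_def by simp
    ultimately have "w2!k = w2!0" "distinct w2" by simp_all
    then have "k = 0" using nth_eq_iff_index_eq[of w2 k 0] k l1 n by simp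
    then show "w1 = w2" using k by simp
  qed
  show ?thesis using img inj by (simp add: card_image)
qed

lemma cyc_contains_rot: "cyc_contains (cyc w) \<pi> adj \<longleftrightarrow> (\<exists>k<length w. contains_vinc (rotate k w) \<pi> adj)"
  unfolding cyc_contains_def cyc_def by blast

lemma setU1: "set (rev [b..<Suc n]) = {b..<Suc n}" by (simp only: set_rev set_upt)

lemma A1_props: assumes b: "b \<in> {1..n}" and w: "w \<in> A1 n b"
  shows "length w = n \<and> distinct w \<and> set w = {1..n} \<and> w!0 = n"
proof -
  have wW: "w \<in> WW (rev [b..<Suc n]) {1..<b}" using w by (simp add: A1_def)
  have d: "distinct w" using wW by (simp add: WW_def)
  have "set w = {b..<Suc n} \<union> {1..<b}" using wW setU1 by (simp add: WW_def)
  then have s: "set w = {1..n}" using b by auto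
  then have l: "length w = n" using d by (metis card_atLeastAtMost diff_Suc_1 distinct_card)
  have ne: "w \<noteq> []" using wW by (simp add: WW_def)
  have "hd (rev [b..<Suc n]) = hd w" using wW by (intro hd_filter_eq) (auto simp: WW_def)
  moreover have "hd (rev [b..<Suc n]) = n" using b by (simp add: hd_rev)
  ultimately have "w!0 = n" using ne by (simp add: hd_conv_nth)
  then show ?thesis using d s l by simp
qed

lemma A2_props: assumes b: "b \<in> {1..n}" and w: "w \<in> A2 n b"
  shows "length w = n \<and> distinct w \<and> set w = {1..n} \<and> w!0 = n"
proof -
  have wW: "w \<in> WW (n # [b..<n]) {1..<b}" using w by (simp add: A2_def)
  have d: "distinct w" using wW by (simp add: WW_def)
  have sw: "set w = insert n {b..<n} \<union> {1..<b}" using wW by (simp add: WW_def)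
  have "x \<in> set w \<longleftrightarrow> x \<in> {1..n}" for x using sw b by auto
  then have s: "set w = {1..n}" by blast
  then have l: "length w = n" using d by (metis card_atLeastAtMost diff_Suc_1 distinct_card)
  have ne: "w \<noteq> []" using wW by (simp add: WW_def)
  have "hd (n # [b..<n]) = hd w" using wW by (intro hd_filter_eq) (auto simp: WW_def)
  then have "w!0 = n" using ne by (simp add: hd_conv_nth)
  then show ?thesis using d s l by simp
qed

lemma A1_disj:
  assumes bb: "1 \<le> b" "b < b'" "b' \<le> n"
  shows "A1 n b \<inter> A1 n b' = {}"
proof (rule ccontr)
  assume "A1 n b \<inter> A1 n b' \<noteq> {}"
  then obtain w where w: "w \<in> A1 n b" "w \<in> A1 n b'" by blast
  have P: "length w = n" "distinct w" "set w = {1..n}" "w!0 = n" using A1_props[OF _ w(1)] bb by auto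
  have dist: "i = j" if "i < n" "j < n" "w!i = w!j" for i j
    using P(1,2) that nth_eq_iff_index_eq by blast
  have vals: "1 \<le> w!i \<and> w!i \<le> n" if "i < n" for i
    using P(1,3) nth_mem[of i w] that by auto
  have wW: "w \<in> WW (rev [b..<Suc n]) {1..<b}" and bad: "\<not> (\<exists>p q. w = p @ Suc b # b # q)"
    using w(1) bb by (auto simp: A1_def)
  have wW': "w \<in> WW (rev [b'..<Suc n]) {1..<b'}" using w(2) by (simp add: A1_def)
  have "b \<in> set w" using P bb by auto
  then obtain q where q: "q < n" "w!q = b" using P(1) by (metis in_set_conv_nth)
  have "q \<noteq> 0"
  proof
    assume "q = 0" then have "b = n" using q P(4) by simp
    then show False using bb by simp
  qed
  then obtain p where p: "q = Suc p" by (cases q) auto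
  have srt: "sorted_wrt (>) (rev [b..<Suc n])" using sorted_wrt_upt[of b "Suc n"] by (simp only: sorted_wrt_rev)
  have pos: "w!j < w!i" if "i < j" "j < n" "b \<le> w!i" "b \<le> w!j" for i j
    using WW_pos[OF wW srt, of i j] that vals[of i] vals[of j] P(1) unfolding setU1 by (simp add: less_Suc_eq_le)
  consider (lt) "w!p < b" | (eq) "w!p = b" | (gt) "w!p > b" by linarith
  then show False
  proof cases
    case lt
    then have "w!Suc p \<in> set (rev [b'..<Suc n])" using WW_na[OF wW', of p] q p P(1) by simp
    then show False using q p bb setU1 by simp
  next
    case eq
    then show False using dist[of p q] q p by simp
  next
    case gt
    have "Suc b \<in> set w" using P bb by auto
    then obtain r where r: "r < n" "w!r = Suc b" using P(1) by (metis in_set_conv_nth)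
    have "r = p"
    proof (rule ccontr)
      assume "r \<noteq> p"
      then consider "r < p" | "p < r" by linarith
      then show False
      proof cases
        case 1
        then have "w!p < w!r" using pos[of r p] r q p gt by simp
        then show False using r gt by simp
      next
        case 2
        have "r \<noteq> Suc p" using r q p by auto
        then have "Suc p < r" using 2 by simp
        then have "w!r < w!Suc p" using pos[of "Suc p" r] r q p by simp
        then show False using r q p by simp
      qed
    qed
    then have "w = take p w @ Suc b # b # drop (Suc (Suc p)) w"
      using nth_decomp[of p w] q p r P(1) by simp
    then show False using bad by blast
  qed
qed

lemma A2_disj:
  assumes bb: "1 \<le> b" "b < b'" "b' \<le> n"
  shows "A2 n b \<inter> A2 n b' = {}"
proof (rule ccontr)
  assume "A2 n b \<inter> A2 n b' \<noteq> {}"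
  then obtain w where w: "w \<in> A2 n b" "w \<in> A2 n b'" by blast
  have P: "length w = n" "distinct w" "set w = {1..n}" "w!0 = n" using A2_props[OF _ w(1)] bb by auto
  have dist: "i = j" if "i < n" "j < n" "w!i = w!j" for i j
    using P(1,2) that nth_eq_iff_index_eq by blast
  have vals: "1 \<le> w!i \<and> w!i \<le> n" if "i < n" for i
    using P(1,3) nth_mem[of i w] that by auto
  have wW: "w \<in> WW (n # [b..<n]) {1..<b}" and bad: "\<not> (\<exists>p q. w = p @ n # b # q)"
    using w(1) bb by (auto simp: A2_def)
  have wW': "w \<in> WW (n # [b'..<n]) {1..<b'}" using w(2) by (simp add: A2_def)
  have "b \<in> set w" using P bb by auto
  then obtain q where q: "q < n" "w!q = b" using P(1) by (metis in_set_conv_nth)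
  have "q \<noteq> 0"
  proof
    assume "q = 0" then have "b = n" using q P(4) by simp
    then show False using bb by simp
  qed
  then obtain p where p: "q = Suc p" by (cases q) auto
  consider (lt) "w!p < b" | (eq) "w!p = b" | (gt) "w!p > b" by linarith
  then show False
  proof cases
    case lt
    then have "w!Suc p \<in> set (n # [b'..<n])" using WW_na[OF wW', of p] q p P(1) by simp
    then show False using q p bb by simp
  next
    case eq
    then show False using dist[of p q] q p by simp
  next
    case gt
    show False
    proof (cases p)
      case 0
      then have "w = take 0 w @ n # b # drop (Suc (Suc 0)) w"
        using nth_decomp[of 0 w] q p P by simp
      then show False using bad by blast
    next
      case (Suc p')
      have m1: "w!p \<in> set (n # [b..<n])" using gt vals[of p] q p by auto
      have m2: "w!Suc p \<in> set (n # [b..<n])" using q p bb by auto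
      have "w!p < w!Suc p" using WW2_pos[OF wW P(4) _ _ _ m1 m2] Suc q p P(1) by simp
      then show False using gt q p by simp
    qed
  qed
qed

lemma WW_finite: "distinct U \<Longrightarrow> U \<noteq> [] \<Longrightarrow> finite S \<Longrightarrow> \<forall>s\<in>S. \<forall>u\<in>set U. s < u \<Longrightarrow> finite (WW U S)"
  using WW_count by (metis card.infinite length_0_conv power_not_zero)

lemma card_A1:
  assumes b: "1 \<le> b" "b \<le> n"
  shows "card (A1 n b) = (if b = n then 1 else (Suc n - b)^(b-1) - (n-b)^(b-1))"
proof (cases "b = n")
  case True
  then have "A1 n b = WW [n] {1..<n}" by (simp add: A1_def)
  then show ?thesis using True WW_count[of "[n]" "{1..<n}"] by simp
next
  case False
  then have bn: "b < n" using b by simp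
  define U where "U = rev [b..<Suc n]"
  define U1 where "U1 = rev [Suc (Suc b)..<Suc n]"
  have "[b..<Suc n] = b # Suc b # [Suc (Suc b)..<Suc n]" using bn by (simp del: upt_Suc add: upt_conv_Cons)
  then have UU: "U = U1 @ Suc b # b # []" unfolding U_def U1_def by simp
  have "[Suc b..<Suc n] = Suc b # [Suc (Suc b)..<Suc n]" using bn by (simp del: upt_Suc add: upt_conv_Cons)
  then have UU': "U1 @ Suc b # [] = rev [Suc b..<Suc n]" unfolding U1_def by simp
  have dU: "distinct U" "U \<noteq> []" unfolding U_def using bn by simp_all
  have SU: "\<forall>s\<in>{1..<b}. \<forall>u\<in>set U. s < u" unfolding U_def by auto
  have eq: "A1 n b = WW U {1..<b} - {w \<in> WW U {1..<b}. \<exists>p q. w = p @ Suc b # b # q}"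
    unfolding A1_def U_def using bn by blast
  have fin: "finite (WW U {1..<b})" using WW_finite dU SU by blast
  have c1: "card (WW U {1..<b}) = (Suc n - b)^(b-1)" using WW_count[OF dU _ SU] bn unfolding U_def by (simp add: Suc_diff_le)
  have c2: "card {w \<in> WW U {1..<b}. \<exists>p q. w = p @ Suc b # b # q} = card (WW (U1 @ Suc b # []) {1..<b})"
    using Bad_count[OF UU _ _ SU] dU by simp
  have dU1: "distinct (U1 @ Suc b # [])" "U1 @ Suc b # [] \<noteq> []" using UU' bn by simp_all
  have SU1: "\<forall>s\<in>{1..<b}. \<forall>u\<in>set (U1 @ Suc b # []). s < u" using UU' by auto
  have c3: "card (WW (U1 @ Suc b # []) {1..<b}) = (n-b)^(b-1)"
    using WW_count[OF dU1 _ SU1] UU' bn by (simp add: Suc_diff_Suc)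
  have "card (A1 n b) = card (WW U {1..<b}) - card {w \<in> WW U {1..<b}. \<exists>p q. w = p @ Suc b # b # q}"
    unfolding eq using fin by (intro card_Diff_subset) (auto intro: finite_subset)
  then show ?thesis using c1 c2 c3 False by simp
qed

lemma card_A2:
  assumes b: "1 \<le> b" "b \<le> n"
  shows "card (A2 n b) = (if b = n then 1 else (Suc n - b)^(b-1) - (n-b)^(b-1))"
proof (cases "b = n")
  case True
  then have "A2 n b = WW [n] {1..<n}" by (simp add: A2_def)
  then show ?thesis using True WW_count[of "[n]" "{1..<n}"] by simp
next
  case False
  then have bn: "b < n" using b by simp
  define U where "U = n # [b..<n]"
  have UU: "U = [] @ n # b # [Suc b..<n]" unfolding U_def using bn by (simp del: upt_Suc add: upt_conv_Cons)
  have dU: "distinct U" "U \<noteq> []" unfolding U_def by simp_all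
  have lU: "length U = Suc n - b" unfolding U_def using bn by simp
  have SU: "\<forall>s\<in>{1..<b}. \<forall>u\<in>set U. s < u" unfolding U_def using bn by auto
  have eq: "A2 n b = WW U {1..<b} - {w \<in> WW U {1..<b}. \<exists>p q. w = p @ n # b # q}"
    unfolding A2_def U_def using bn by blast
  have fin: "finite (WW U {1..<b})" using WW_finite dU SU by blast
  have c1: "card (WW U {1..<b}) = (Suc n - b)^(b-1)" using WW_count[OF dU _ SU] lU by simp
  have c2: "card {w \<in> WW U {1..<b}. \<exists>p q. w = p @ n # b # q} = card (WW ([] @ n # [Suc b..<n]) {1..<b})"
    using Bad_count[OF UU _ _ SU] dU bn by simp
  have dU1: "distinct ([] @ n # [Suc b..<n])" "[] @ n # [Suc b..<n] \<noteq> []" by simp_all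
  have SU1: "\<forall>s\<in>{1..<b}. \<forall>u\<in>set ([] @ n # [Suc b..<n]). s < u" using bn by auto
  have c3: "card (WW ([] @ n # [Suc b..<n]) {1..<b}) = (n-b)^(b-1)"
    using WW_count[OF dU1 _ SU1] bn by (simp add: Suc_diff_Suc)
  have "card (A2 n b) = card (WW U {1..<b}) - card {w \<in> WW U {1..<b}. \<exists>p q. w = p @ n # b # q}"
    unfolding eq using fin by (intro card_Diff_subset) (auto intro: finite_subset)
  then show ?thesis using c1 c2 c3 False by simp
qed

lemma arith_id:
  assumes m: "1 \<le> m"
  shows "(\<Sum>i=1..m. ((i+1)^(m-i) - i^(m-i) :: nat)) = (\<Sum>i=0..m-1. i*(i+1)^(m-1-i))"
proof -
  have le: "i^(m-i) \<le> (i+1)^(m-i)" for i :: nat by (simp add: power_mono)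
  have L: "int (\<Sum>i=1..m. ((i+1)^(m-i) - i^(m-i) :: nat)) =
      (\<Sum>i=1..m. (int i + 1)^(m-i)) - (\<Sum>i=1..m. (int i)^(m-i))"
  proof -
    have le': "int ((x+1)^(m-x) - x^(m-x)) = (int x + 1)^(m-x) - (int x)^(m-x)" for x
      using le[of x] by (simp add: of_nat_diff add.commute)
    have "int (\<Sum>i=1..m. ((i+1)^(m-i) - i^(m-i) :: nat)) = (\<Sum>i=1..m. int ((i+1)^(m-i) - i^(m-i)))"
      by (rule of_nat_sum)
    also have "\<dots> = (\<Sum>i=1..m. (int i + 1)^(m-i) - (int i)^(m-i))" using le' by presburger
    finally show ?thesis by (simp add: sum_subtractf)
  qed
  have R: "int (\<Sum>i=0..m-1. i*(i+1)^(m-1-i)) =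
      (\<Sum>i=0..m-1. (int i + 1)^(m-i)) - (\<Sum>i=0..m-1. (int i + 1)^(m-1-i))"
  proof -
    have "int (i*(i+1)^(m-1-i)) = (int i + 1)^(m-i) - (int i + 1)^(m-1-i)" if "i \<le> m - 1" for i
    proof -
      have "m - i = Suc (m-1-i)" using that m by simp
      then show ?thesis by (simp add: algebra_simps)
    qed
    then have "int (\<Sum>i=0..m-1. i*(i+1)^(m-1-i)) = (\<Sum>i=0..m-1. (int i + 1)^(m-i) - (int i + 1)^(m-1-i))"
      by (simp add: of_nat_sum)
    then show ?thesis by (simp add: sum_subtractf)
  qed
  obtain k where k: "m = Suc k" using m by (cases m) auto
  have A: "(\<Sum>i=1..m. (int i + 1)^(m-i)) = (\<Sum>i=0..m-1. (int i + 1)^(m-i))"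
  proof -
    have "(\<Sum>i=1..Suc k. (int i + 1)^(Suc k-i)) = (\<Sum>i=1..k. (int i + 1)^(Suc k-i)) + 1"
      by (simp add: sum.cl_ivl_Suc)
    moreover have "(\<Sum>i=0..k. (int i + 1)^(Suc k-i)) = 1 + (\<Sum>i=1..k. (int i + 1)^(Suc k-i))"
      by (simp add: sum.atLeast_Suc_atMost)
    ultimately show ?thesis using k by simp
  qed
  have B: "(\<Sum>i=1..m. (int i)^(m-i)) = (\<Sum>i=0..m-1. (int i + 1)^(m-1-i))"
  proof -
    have "(\<Sum>i=Suc 0..Suc k. (int i)^(Suc k-i)) = (\<Sum>i=0..k. (int (Suc i))^(Suc k - Suc i))"
      by (rule sum.shift_bounds_cl_Suc_ivl)
    then show ?thesis using k by (simp add: add.commute)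
  qed
  have "int (\<Sum>i=1..m. ((i+1)^(m-i) - i^(m-i) :: nat)) = int (\<Sum>i=0..m-1. i*(i+1)^(m-1-i))"
    using L R A B by simp
  then show ?thesis by linarith
qed

lemma perm_facts:
  assumes "w \<in> lin_perms n" "hd w = n" "1 \<le> n"
  shows "length w = n" "distinct w" "set w = {1..n}" "w!0 = n" "\<forall>i<n. w!i \<le> n"
proof -
  show l: "length w = n" using assms lin_perms_len by blast
  show "distinct w" "set w = {1..n}" using assms unfolding lin_perms_def by auto
  have "w \<noteq> []" using l assms by auto
  then show "w!0 = n" using assms by (simp add: hd_conv_nth)
  show "\<forall>i<n. w!i \<le> n" using l \<open>set w = {1..n}\<close> by (metis atLeastAtMost_iff nth_mem)
qed

lemma H_eq1:
  assumes n: "2 \<le> n"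
  shows "{w \<in> lin_perms n. hd w = n \<and> \<not> cyc_contains (cyc w) [1,2,3,4] {0}} = (\<Union>b\<in>{1..n}. A1 n b)"
proof
  show "{w \<in> lin_perms n. hd w = n \<and> \<not> cyc_contains (cyc w) [1,2,3,4] {0}} \<subseteq> (\<Union>b\<in>{1..n}. A1 n b)"
  proof
    fix w assume w: "w \<in> {w \<in> lin_perms n. hd w = n \<and> \<not> cyc_contains (cyc w) [1,2,3,4] {0}}"
    have P: "length w = n" "distinct w" "set w = {1..n}" "w!0 = n" "\<forall>i<n. w!i \<le> n"
      using perm_facts[of w n] w n by auto
    have "\<not> (\<exists>k<n. contains_vinc (rotate k w) [1,2,3,4] {0})" using w P(1) cyc_contains_rot by auto
    then have "V1 n w" using cyc1[OF P(1,2,4,5)] by blast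
    then show "w \<in> (\<Union>b\<in>{1..n}. A1 n b)" using char1[OF P(1-4) n] by blast
  qed
next
  show "(\<Union>b\<in>{1..n}. A1 n b) \<subseteq> {w \<in> lin_perms n. hd w = n \<and> \<not> cyc_contains (cyc w) [1,2,3,4] {0}}"
  proof
    fix w assume "w \<in> (\<Union>b\<in>{1..n}. A1 n b)"
    then obtain b where b: "b \<in> {1..n}" "w \<in> A1 n b" by blast
    have P: "length w = n" "distinct w" "set w = {1..n}" "w!0 = n" using A1_props[OF b] by auto
    have vals: "\<forall>i<n. w!i \<le> n" using P(1,3) by (metis atLeastAtMost_iff nth_mem)
    have "V1 n w" using char1[OF P n] b by blast
    then have "\<not> (\<exists>k<n. contains_vinc (rotate k w) [1,2,3,4] {0})" using cyc1[OF P(1,2,4) vals] by blast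
    then have "\<not> cyc_contains (cyc w) [1,2,3,4] {0}" using P(1) cyc_contains_rot by auto
    moreover have "w \<in> lin_perms n" using P unfolding lin_perms_def by simp
    moreover have "hd w = n" using P n by (cases w) auto
    ultimately show "w \<in> {w \<in> lin_perms n. hd w = n \<and> \<not> cyc_contains (cyc w) [1,2,3,4] {0}}" by blast
  qed
qed

lemma H_eq2:
  assumes n: "2 \<le> n"
  shows "{w \<in> lin_perms n. hd w = n \<and> \<not> cyc_contains (cyc w) [1,2,4,3] {0}} = (\<Union>b\<in>{1..n}. A2 n b)"
proof
  show "{w \<in> lin_perms n. hd w = n \<and> \<not> cyc_contains (cyc w) [1,2,4,3] {0}} \<subseteq> (\<Union>b\<in>{1..n}. A2 n b)"
  proof
    fix w assume w: "w \<in> {w \<in> lin_perms n. hd w = n \<and> \<not> cyc_contains (cyc w) [1,2,4,3] {0}}"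
    have P: "length w = n" "distinct w" "set w = {1..n}" "w!0 = n" "\<forall>i<n. w!i \<le> n"
      using perm_facts[of w n] w n by auto
    have "\<not> (\<exists>k<n. contains_vinc (rotate k w) [1,2,4,3] {0})" using w P(1) cyc_contains_rot by auto
    then have "V2 n w" using cyc2[OF P(1,2,4,5)] by blast
    then show "w \<in> (\<Union>b\<in>{1..n}. A2 n b)" using char2[OF P(1-4) n] by blast
  qed
next
  show "(\<Union>b\<in>{1..n}. A2 n b) \<subseteq> {w \<in> lin_perms n. hd w = n \<and> \<not> cyc_contains (cyc w) [1,2,4,3] {0}}"
  proof
    fix w assume "w \<in> (\<Union>b\<in>{1..n}. A2 n b)"
    then obtain b where b: "b \<in> {1..n}" "w \<in> A2 n b" by blast
    have P: "length w = n" "distinct w" "set w = {1..n}" "w!0 = n" using A2_props[OF b] by auto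
    have vals: "\<forall>i<n. w!i \<le> n" using P(1,3) by (metis atLeastAtMost_iff nth_mem)
    have "V2 n w" using char2[OF P n] b by blast
    then have "\<not> (\<exists>k<n. contains_vinc (rotate k w) [1,2,4,3] {0})" using cyc2[OF P(1,2,4) vals] by blast
    then have "\<not> cyc_contains (cyc w) [1,2,4,3] {0}" using P(1) cyc_contains_rot by auto
    moreover have "w \<in> lin_perms n" using P unfolding lin_perms_def by simp
    moreover have "hd w = n" using P n by (cases w) auto
    ultimately show "w \<in> {w \<in> lin_perms n. hd w = n \<and> \<not> cyc_contains (cyc w) [1,2,4,3] {0}}" by blast
  qed
qed

lemma A1_fin: "b \<le> n \<Longrightarrow> finite (A1 n b)"
proof -
  assume b: "b \<le> n"
  have "finite (WW (rev [b..<Suc n]) {1..<b})" using b by (intro WW_finite) auto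
  moreover have "A1 n b \<subseteq> WW (rev [b..<Suc n]) {1..<b}" by (auto simp: A1_def)
  ultimately show ?thesis by (rule finite_subset[rotated])
qed

lemma A2_fin: "b \<le> n \<Longrightarrow> finite (A2 n b)"
proof -
  assume b: "b \<le> n"
  have "finite (WW (n # [b..<n]) {1..<b})" using b by (intro WW_finite) auto
  moreover have "A2 n b \<subseteq> WW (n # [b..<n]) {1..<b}" by (auto simp: A2_def)
  ultimately show ?thesis by (rule finite_subset[rotated])
qed

lemma sum_formula:
  assumes n: "2 \<le> n"
  shows "(\<Sum>b\<in>{1..n}. (if b = n then 1 else (Suc n - b)^(b-1) - (n-b)^(b-1)) :: nat)
       = 1 + (\<Sum>i=0..n-2. i * (i+1)^(n-i-2))"
proof -
  let ?c = "\<lambda>b::nat. (if b = n then 1 else (Suc n - b)^(b-1) - (n-b)^(b-1)) :: nat"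
  have "{1..n} = insert n {1..<n}" using n by auto
  then have "(\<Sum>b\<in>{1..n}. ?c b) = 1 + (\<Sum>b\<in>{1..<n}. ?c b)" by simp
  also have "(\<Sum>b\<in>{1..<n}. ?c b) = (\<Sum>b\<in>{1..<n}. (Suc n - b)^(b-1) - (n-b)^(b-1))" by simp
  also have "\<dots> = (\<Sum>i=1..n-1. ((i+1)^((n-1)-i) - i^((n-1)-i)))"
    apply (rule sum.reindex_bij_witness[of _ "\<lambda>b. n - b" "\<lambda>i. n - i"])
        apply auto[4]
    subgoal for a
      by (subgoal_tac "n - a + 1 = Suc n - a \<and> (n-1) - (n-a) = a - 1") auto
    done
  also have "\<dots> = (\<Sum>i=0..(n-1)-1. i*(i+1)^((n-1)-1-i))" using n by (intro arith_id) simp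
  also have "\<dots> = (\<Sum>i=0..n-2. i * (i+1)^(n-i-2))"
    by (intro sum.cong) auto
  finally show ?thesis .
qed

theorem theorem5p4:
  fixes n :: nat
  assumes "n \<ge> 2"
  shows "card (cyc_Av n [1,2,3,4] {0}) = 1 + (\<Sum>i=0..n-2. i * (i+1)^(n-i-2))
       \<and> card (cyc_Av n [1,2,4,3] {0}) = 1 + (\<Sum>i=0..n-2. i * (i+1)^(n-i-2))"
proof
  have n1: "1 \<le> n" using assms by simp
  have disj1: "A1 n b \<inter> A1 n b' = {}" if "b \<in> {1..n}" "b' \<in> {1..n}" "b \<noteq> b'" for b b'
  proof (cases "b < b'")
    case True then show ?thesis using A1_disj that by auto
  next
    case False then have "b' < b" using that by simp
    then show ?thesis using A1_disj[of b' b n] that by auto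
  qed
  have "card (cyc_Av n [1,2,3,4] {0}) = card (\<Union>b\<in>{1..n}. A1 n b)"
    using card_cycAv[OF n1] H_eq1[OF assms] by simp
  also have "\<dots> = (\<Sum>b\<in>{1..n}. card (A1 n b))"
    using disj1 A1_fin by (intro card_UN_disjoint) auto
  also have "\<dots> = (\<Sum>b\<in>{1..n}. (if b = n then 1 else (Suc n - b)^(b-1) - (n-b)^(b-1)))"
    using card_A1 by (intro sum.cong) auto
  also have "\<dots> = 1 + (\<Sum>i=0..n-2. i * (i+1)^(n-i-2))" using sum_formula[OF assms] .
  finally show "card (cyc_Av n [1,2,3,4] {0}) = 1 + (\<Sum>i=0..n-2. i * (i+1)^(n-i-2))" .
next
  have n1: "1 \<le> n" using assms by simp
  have disj2: "A2 n b \<inter> A2 n b' = {}" if "b \<in> {1..n}" "b' \<in> {1..n}" "b \<noteq> b'" for b b'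
  proof (cases "b < b'")
    case True then show ?thesis using A2_disj that by auto
  next
    case False then have "b' < b" using that by simp
    then show ?thesis using A2_disj[of b' b n] that by auto
  qed
  have "card (cyc_Av n [1,2,4,3] {0}) = card (\<Union>b\<in>{1..n}. A2 n b)"
    using card_cycAv[OF n1] H_eq2[OF assms] by simp
  also have "\<dots> = (\<Sum>b\<in>{1..n}. card (A2 n b))"
    using disj2 A2_fin by (intro card_UN_disjoint) auto
  also have "\<dots> = (\<Sum>b\<in>{1..n}. (if b = n then 1 else (Suc n - b)^(b-1) - (n-b)^(b-1)))"
    using card_A2 by (intro sum.cong) auto
  also have "\<dots> = 1 + (\<Sum>i=0..n-2. i * (i+1)^(n-i-2))" using sum_formula[OF assms] .
  finally show "card (cyc_Av n [1,2,4,3] {0}) = 1 + (\<Sum>i=0..n-2. i * (i+1)^(n-i-2))" .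
qed

end
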